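(* Every Temperley–Lieb diagram $x$ in $\mathcal{TL}_0(\Bbbk)$ can be written uniquely as $x=x_{\mathrm{cup}}\circ x_{\mathrm{cap}}$, where $x_{\mathrm{cup}}$ is a cup diagram and $x_{\mathrm{cap}}$ is a cap diagram.
   Context: $\Bbbk$ is a field. $\mathcal{TL}_0(\Bbbk)$ is the strict $\Bbbk$-linear monoidal category with objects $\mathbf 0,\mathbf 1,\dots$, $\mathbf m\otimes\mathbf n=\mathbf{m+n}$, whose morphisms are generated under composition, tensor product and linear combination by $\mathrm{cup}:\mathbf 0\to\mathbf 2$ and $\mathrm{cap}:\mathbf 2\to\mathbf 0$ subject to $(\mathrm{id}_{\mathbf 1}\otimes\mathrm{cap})\circ(\mathrm{cup}\otimes\mathrm{id}_{\mathbf 1})=0=(\mathrm{cap}\otimes\mathrm{id}_{\mathbf 1})\circ(\mathrm{id}_{\mathbf 1}\otimes\mathrm{cup})$ and $\mathrm{cap}\circ\mathrm{cup}=\mathrm{id}_{\mathbf 0}$. A Temperley–Lieb diagram is a nonzero morphism obtainable from $\mathrm{cup}$, $\mathrm{cap}$ and identity morphisms using only $\otimes$ and $\circ$; a cup diagram (resp. cap diagram) is a nonzero morphism obtainable in this way from $\mathrm{cup}$ (resp. $\mathrm{cap}$) and identity morphisms only. *)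

theory Defs
  imports Main
begin

text \<open>Syntactic morphism terms of the free strict monoidal category generated by
  cup : 0 -> 2 and cap : 2 -> 0.  Comp g f means g o f.\<close>
datatype tm = Cup | Cap | Idn nat | Comp tm tm | Tens tm tm

inductive typed :: "tm \<Rightarrow> nat \<Rightarrow> nat \<Rightarrow> bool" where
  "typed Cup 0 2"
| "typed Cap 2 0"
| "typed (Idn n) n n"
| "typed f a b \<Longrightarrow> typed g b c \<Longrightarrow> typed (Comp g f) a c"
| "typed f a b \<Longrightarrow> typed g c d \<Longrightarrow> typed (Tens f g) (a + c) (b + d)"

fun no_cap :: "tm \<Rightarrow> bool" where
  "no_cap Cup = True"
| "no_cap Cap = False"
| "no_cap (Idn n) = True"
| "no_cap (Comp g f) = (no_cap g \<and> no_cap f)"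
| "no_cap (Tens f g) = (no_cap f \<and> no_cap g)"

fun no_cup :: "tm \<Rightarrow> bool" where
  "no_cup Cup = False"
| "no_cup Cap = True"
| "no_cup (Idn n) = True"
| "no_cup (Comp g f) = (no_cup g \<and> no_cup f)"
| "no_cup (Tens f g) = (no_cup f \<and> no_cup g)"

text \<open>Formal k-linear combinations of terms are functions tm => k (finitely supported
  ones arise). The basis vector of a term: \<close>
definition ind :: "tm \<Rightarrow> tm \<Rightarrow> 'k::zero_neq_one" where
  "ind t = (\<lambda>s. if s = t then 1 else 0)"

text \<open>Bilinear extension of composition / tensor with a fixed basis term.\<close>
definition diff :: "(tm \<Rightarrow> 'k::ab_group_add) \<Rightarrow> (tm \<Rightarrow> 'k) \<Rightarrow> tm \<Rightarrow> 'k" where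
  "diff x y = (\<lambda>s. x s - y s)"

definition lcomp :: "tm \<Rightarrow> (tm \<Rightarrow> 'k::zero) \<Rightarrow> tm \<Rightarrow> 'k" where
  "lcomp t x = (\<lambda>s. case s of Comp t' u \<Rightarrow> if t' = t then x u else 0 | _ \<Rightarrow> 0)"
definition rcomp :: "(tm \<Rightarrow> 'k::zero) \<Rightarrow> tm \<Rightarrow> tm \<Rightarrow> 'k" where
  "rcomp x t = (\<lambda>s. case s of Comp u t' \<Rightarrow> if t' = t then x u else 0 | _ \<Rightarrow> 0)"
definition ltens :: "tm \<Rightarrow> (tm \<Rightarrow> 'k::zero) \<Rightarrow> tm \<Rightarrow> 'k" where
  "ltens t x = (\<lambda>s. case s of Tens t' u \<Rightarrow> if t' = t then x u else 0 | _ \<Rightarrow> 0)"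
definition rtens :: "(tm \<Rightarrow> 'k::zero) \<Rightarrow> tm \<Rightarrow> tm \<Rightarrow> 'k" where
  "rtens x t = (\<lambda>s. case s of Tens u t' \<Rightarrow> if t' = t then x u else 0 | _ \<Rightarrow> 0)"

text \<open>null m n x: the linear combination x of terms of type m -> n is zero in TL_0(k),
  i.e. lies in the tensor ideal generated by the strict monoidal category axioms and
  the defining relations of TL_0.\<close>
inductive null :: "nat \<Rightarrow> nat \<Rightarrow> (tm \<Rightarrow> 'k::field) \<Rightarrow> bool" where
  zig1: "null 1 1 (ind (Comp (Tens (Idn 1) Cap) (Tens Cup (Idn 1))))"
| zig2: "null 1 1 (ind (Comp (Tens Cap (Idn 1)) (Tens (Idn 1) Cup)))"
| circ: "null 0 0 (diff (ind (Comp Cap Cup)) (ind (Idn 0)))"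
| assoc: "typed f a b \<Longrightarrow> typed g b c \<Longrightarrow> typed h c d \<Longrightarrow>
     null a d (diff (ind (Comp h (Comp g f))) (ind (Comp (Comp h g) f)))"
| idl: "typed f a b \<Longrightarrow> null a b (diff (ind (Comp (Idn b) f)) (ind f))"
| idr: "typed f a b \<Longrightarrow> null a b (diff (ind (Comp f (Idn a))) (ind f))"
| tassoc: "typed f a b \<Longrightarrow> typed g c d \<Longrightarrow> typed h e p \<Longrightarrow>
     null (a + c + e) (b + d + p) (diff (ind (Tens (Tens f g) h)) (ind (Tens f (Tens g h))))"
| tunitl: "typed f a b \<Longrightarrow> null a b (diff (ind (Tens (Idn 0) f)) (ind f))"
| tunitr: "typed f a b \<Longrightarrow> null a b (diff (ind (Tens f (Idn 0))) (ind f))"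
| tid: "null (m + n) (m + n) (diff (ind (Tens (Idn m) (Idn n))) (ind (Idn (m + n))))"
| interchange: "typed f a b \<Longrightarrow> typed g b c \<Longrightarrow> typed h d e \<Longrightarrow> typed k e p \<Longrightarrow>
     null (a + d) (c + p) (diff (ind (Tens (Comp g f) (Comp k h))) (ind (Comp (Tens g k) (Tens f h))))"
| zero: "null m n (\<lambda>s. 0)"
| add: "null m n x \<Longrightarrow> null m n y \<Longrightarrow> null m n (\<lambda>s. x s + y s)"
| smult: "null m n x \<Longrightarrow> null m n (\<lambda>s. c * x s)"
| lcomp: "null m n x \<Longrightarrow> typed t n p \<Longrightarrow> null m p (lcomp t x)"
| rcomp: "null m n x \<Longrightarrow> typed t p m \<Longrightarrow> null p n (rcomp x t)"
| ltens: "null m n x \<Longrightarrow> typed t p q \<Longrightarrow> null (p + m) (q + n) (ltens t x)"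
| rtens: "null m n x \<Longrightarrow> typed t p q \<Longrightarrow> null (m + p) (n + q) (rtens x t)"

definition tl_eq :: "'k::field itself \<Rightarrow> nat \<Rightarrow> nat \<Rightarrow> tm \<Rightarrow> tm \<Rightarrow> bool" where
  "tl_eq K m n s t = null m n (diff (ind s) (ind t :: tm \<Rightarrow> 'k))"

definition tl_nonzero :: "'k::field itself \<Rightarrow> nat \<Rightarrow> nat \<Rightarrow> tm \<Rightarrow> bool" where
  "tl_nonzero K m n t = (\<not> null m n (ind t :: tm \<Rightarrow> 'k))"

end

theory Submission
  imports Defs
begin

fun src :: "tm \<Rightarrow> nat" where
  "src Cup = 0" | "src Cap = 2" | "src (Idn n) = n" | "src (Comp g f) = src f"
| "src (Tens f g) = src f + src g"

fun tgt :: "tm \<Rightarrow> nat" where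
  "tgt Cup = 2" | "tgt Cap = 0" | "tgt (Idn n) = n" | "tgt (Comp g f) = tgt g"
| "tgt (Tens f g) = tgt f + tgt g"

fun wf :: "tm \<Rightarrow> bool" where
  "wf Cup = True" | "wf Cap = True" | "wf (Idn n) = True"
| "wf (Comp g f) = (wf g \<and> wf f \<and> src g = tgt f)"
| "wf (Tens f g) = (wf f \<and> wf g)"

lemma typed_iff: "typed t m n \<longleftrightarrow> wf t \<and> src t = m \<and> tgt t = n"
proof
  assume "typed t m n" then show "wf t \<and> src t = m \<and> tgt t = n"
    by (induction rule: typed.induct) auto
next
  assume "wf t \<and> src t = m \<and> tgt t = n" then show "typed t m n"
  proof (induction t arbitrary: m n)
    case (Comp g f) then show ?case by (auto intro: typed.intros)
  next
    case (Tens f g) then show ?case by (auto intro: typed.intros)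
  qed (auto intro: typed.intros)
qed

fun sem :: "tm \<Rightarrow> nat list \<Rightarrow> nat list option" where
  "sem Cup w = (if w = [] then Some [0,1] else None)"
| "sem Cap w = (if w = [0,1] then Some [] else None)"
| "sem (Idn n) w = (if length w = n then Some w else None)"
| "sem (Comp g f) w = (case sem f w of None \<Rightarrow> None | Some v \<Rightarrow> sem g v)"
| "sem (Tens f g) w = (case sem f (take (src f) w) of None \<Rightarrow> None
     | Some a \<Rightarrow> (case sem g (drop (src f) w) of None \<Rightarrow> None | Some b \<Rightarrow> Some (a @ b)))"

lemma sem_len: "wf t \<Longrightarrow> sem t w = Some v \<Longrightarrow> length w = src t \<and> length v = tgt t"
proof (induction t arbitrary: w v)
  case (Comp g f) then show ?case by (auto split: option.splits)
next
  case (Tens f g)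
  then show ?case
  proof (cases "sem f (take (src f) w)")
    case (Some a)
    then show ?thesis using Tens
      by (cases "sem g (drop (src f) w)") (fastforce simp: min_def split: if_splits)+
  qed simp
qed (auto split: if_splits)

definition chi :: "bool \<Rightarrow> 'k::field" where "chi b = (if b then 1 else 0)"

definition supp :: "(tm \<Rightarrow> 'k::zero) \<Rightarrow> tm set" where "supp x = {s. x s \<noteq> 0}"

definition ev :: "(tm \<Rightarrow> 'k::field) \<Rightarrow> nat list \<Rightarrow> nat list \<Rightarrow> 'k" where
  "ev x u v = (\<Sum>s\<in>supp x. x s * chi (sem s u = Some v))"

definition Inv :: "nat \<Rightarrow> nat \<Rightarrow> (tm \<Rightarrow> 'k::field) \<Rightarrow> bool" where
  "Inv m n x = (finite (supp x) \<and> (\<forall>s\<in>supp x. typed s m n) \<and> (\<forall>u v. ev x u v = 0))"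

lemma ev_superset:
  assumes "finite S" "supp x \<subseteq> S"
  shows "ev x u v = (\<Sum>s\<in>S. x s * chi (sem s u = Some v))"
  unfolding ev_def
  by (rule sum.mono_neutral_left) (use assms in \<open>auto simp: supp_def\<close>)

lemma Inv_diff:
  assumes "typed s m n" "typed t m n" "sem s = sem t"
  shows "Inv m n (diff (ind s) (ind t) :: tm \<Rightarrow> 'k::field)"
proof (cases "s = t")
  case True
  then have "supp (diff (ind s) (ind t) :: tm \<Rightarrow> 'k) = {}" by (auto simp: supp_def diff_def)
  then show ?thesis by (auto simp: Inv_def ev_def)
next
  case False
  have sp: "supp (diff (ind s) (ind t) :: tm \<Rightarrow> 'k) \<subseteq> {s, t}" by (auto simp: supp_def diff_def ind_def)
  have "ev (diff (ind s) (ind t) :: tm \<Rightarrow> 'k) u v = 0" for u v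
    using False assms(3) by (subst ev_superset[OF _ sp]) (auto simp: diff_def ind_def)
  then show ?thesis using sp assms finite_subset[OF sp] by (auto simp: Inv_def)
qed

lemma Inv_ind0:
  assumes "typed s m n" "\<And>u. sem s u = None"
  shows "Inv m n (ind s :: tm \<Rightarrow> 'k::field)"
proof -
  have sp: "supp (ind s :: tm \<Rightarrow> 'k) \<subseteq> {s}" by (auto simp: supp_def ind_def)
  have "ev (ind s :: tm \<Rightarrow> 'k) u v = 0" for u v
    using assms(2) by (subst ev_superset[OF _ sp]) (auto simp: chi_def ind_def)
  then show ?thesis using sp assms finite_subset[OF sp] by (auto simp: Inv_def)
qed

lemma sem_tassoc: "sem (Tens (Tens f g) h) w = sem (Tens f (Tens g h)) w"
  by (simp add: take_take drop_take add.commute split: option.splits)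

lemma sem_idl: "wf f \<Longrightarrow> sem (Comp (Idn (tgt f)) f) = sem f"
  by (rule ext) (auto split: option.splits dest: sem_len)

lemma sem_idr: "wf f \<Longrightarrow> sem (Comp f (Idn (src f))) = sem f"
proof (rule ext)
  fix w assume "wf f"
  then show "sem (Comp f (Idn (src f))) w = sem f w"
    by (cases "sem f w") (auto dest: sem_len split: option.splits)
qed

lemma sem_tunitl: "sem (Tens (Idn 0) f) = sem f"
  by (rule ext) (auto split: option.splits)

lemma sem_tunitr: "wf f \<Longrightarrow> sem (Tens f (Idn 0)) = sem f"
proof (rule ext)
  fix w assume wf: "wf f"
  show "sem (Tens f (Idn 0)) w = sem f w"
  proof (cases "length w \<le> src f")
    case True then show ?thesis by (auto split: option.splits)
  next
    case False
    then have "sem f w = None" using sem_len[OF wf, of w] by (cases "sem f w") auto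
    then show ?thesis using False by (auto split: option.splits)
  qed
qed

lemma sem_tid: "sem (Tens (Idn m) (Idn n)) = sem (Idn (m + n))"
  by (rule ext) (auto split: option.splits)

lemma sem_interchange:
  assumes "wf f" "wf g" "wf h" "wf k" "src g = tgt f" "src k = tgt h"
  shows "sem (Tens (Comp g f) (Comp k h)) = sem (Comp (Tens g k) (Tens f h))"
proof (rule ext)
  fix w
  show "sem (Tens (Comp g f) (Comp k h)) w = sem (Comp (Tens g k) (Tens f h)) w"
  proof (cases "sem f (take (src f) w)")
    case (Some a)
    then have la: "length a = src g" using sem_len[OF assms(1)] assms(5) by auto
    show ?thesis using Some la by (auto split: option.splits)
  qed simp
qed

lemma app_split_r: "(a' @ b = v) \<longleftrightarrow> (length b \<le> length v \<and> drop (length v - length b) v = b \<and> a' = take (length v - length b) v)"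
proof
  assume "a' @ b = v" then show "length b \<le> length v \<and> drop (length v - length b) v = b \<and> a' = take (length v - length b) v"
    by auto
next
  assume "length b \<le> length v \<and> drop (length v - length b) v = b \<and> a' = take (length v - length b) v"
  then show "a' @ b = v" by (metis append_take_drop_id)
qed

lemma null_Inv: "null m n (x :: tm \<Rightarrow> 'k::field) \<Longrightarrow> Inv m n x"
proof (induction rule: null.induct)
  case zig1
  show ?case by (rule Inv_ind0) (auto simp: typed_iff split: option.splits)
next
  case zig2
  show ?case by (rule Inv_ind0) (auto simp: typed_iff split: option.splits)
next
  case circ
  show ?case by (rule Inv_diff) (auto simp: typed_iff split: option.splits)
next
  case (assoc f a b g c h d)
  show ?case using assoc by (intro Inv_diff) (auto simp: typed_iff split: option.splits)
next
  case (idl f a b)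
  show ?case using idl sem_idl[of f] by (intro Inv_diff) (auto simp: typed_iff)
next
  case (idr f a b)
  show ?case using idr sem_idr[of f] by (intro Inv_diff) (auto simp: typed_iff)
next
  case (tassoc f a b g c d h e p)
  show ?case using tassoc sem_tassoc[of f g h] by (intro Inv_diff) (auto simp: typed_iff)
next
  case (tunitl f a b)
  show ?case using tunitl sem_tunitl[of f] by (intro Inv_diff) (auto simp: typed_iff)
next
  case (tunitr f a b)
  show ?case using tunitr sem_tunitr[of f] by (intro Inv_diff) (auto simp: typed_iff)
next
  case (tid m n)
  show ?case using sem_tid[of m n] by (intro Inv_diff) (auto simp: typed_iff)
next
  case (interchange f a b g c h d e k p)
  show ?case using interchange sem_interchange[of f g h k] by (intro Inv_diff) (auto simp: typed_iff)
next
  case (zero m n)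
  show ?case by (auto simp: Inv_def supp_def ev_def)
next
  case (add m n x y)
  have sp: "supp (\<lambda>s. x s + y s) \<subseteq> supp x \<union> supp y" by (auto simp: supp_def)
  have fin: "finite (supp x \<union> supp y)" using add by (auto simp: Inv_def)
  have "ev (\<lambda>s. x s + y s) u v = 0" for u v
  proof -
    have "ev (\<lambda>s. x s + y s) u v = (\<Sum>s\<in>supp x \<union> supp y. (x s + y s) * chi (sem s u = Some v))"
      by (rule ev_superset[OF fin sp])
    also have "\<dots> = (\<Sum>s\<in>supp x \<union> supp y. x s * chi (sem s u = Some v))
                   + (\<Sum>s\<in>supp x \<union> supp y. y s * chi (sem s u = Some v))"
      by (simp add: distrib_right sum.distrib)
    also have "\<dots> = ev x u v + ev y u v"
      using ev_superset[OF fin, of x] ev_superset[OF fin, of y] by auto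
    finally show ?thesis using add by (simp add: Inv_def)
  qed
  then show ?case using add sp fin finite_subset[OF sp fin] by (auto simp: Inv_def)
next
  case (smult m n x c)
  have sp: "supp (\<lambda>s. c * x s) \<subseteq> supp x" by (auto simp: supp_def)
  have fin: "finite (supp x)" using smult by (auto simp: Inv_def)
  have "ev (\<lambda>s. c * x s) u v = 0" for u v
  proof -
    have "ev (\<lambda>s. c * x s) u v = (\<Sum>s\<in>supp x. c * x s * chi (sem s u = Some v))"
      by (rule ev_superset[OF fin sp])
    also have "\<dots> = c * ev x u v" by (simp add: ev_def sum_distrib_left mult.assoc)
    finally show ?thesis using smult by (simp add: Inv_def)
  qed
  then show ?case using smult sp fin finite_subset[OF sp fin] by (auto simp: Inv_def)
next
  case (lcomp m n x t p)
  let ?y = "lcomp t x"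
  have fin: "finite (supp x)" using lcomp by (auto simp: Inv_def)
  have sp: "supp ?y \<subseteq> Comp t ` supp x"
  proof
    fix s assume "s \<in> supp ?y"
    then show "s \<in> Comp t ` supp x" by (cases s) (auto simp: supp_def lcomp_def split: if_splits)
  qed
  have fin2: "finite (Comp t ` supp x)" using fin by simp
  have "ev ?y u v = 0" for u v
  proof -
    define W where "W = (\<lambda>s. the (sem s u)) ` supp x"
    have finW: "finite W" using fin by (simp add: W_def)
    have pt: "(chi (sem (Comp t s) u = Some v) :: 'k) = (\<Sum>w\<in>W. chi (sem s u = Some w) * chi (sem t w = Some v))"
      if "s \<in> supp x" for s
    proof (cases "sem s u")
      case None then show ?thesis by (simp add: chi_def)
    next
      case (Some w0)
      then have "w0 \<in> W" using that by (force simp: W_def)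
      moreover have "(\<Sum>w\<in>W. chi (sem s u = Some w) * chi (sem t w = Some v))
          = (\<Sum>w\<in>W. if w0 = w then chi (sem t w = Some v) else (0::'k))"
        using Some by (intro sum.cong) (auto simp: chi_def)
      ultimately have "(\<Sum>w\<in>W. chi (sem s u = Some w) * chi (sem t w = Some v)) = (chi (sem t w0 = Some v) :: 'k)"
        using finW by (simp add: sum.delta)
      then show ?thesis using Some by simp
    qed
    have "ev ?y u v = (\<Sum>s'\<in>Comp t ` supp x. ?y s' * chi (sem s' u = Some v))"
      by (rule ev_superset[OF fin2 sp])
    also have "\<dots> = (\<Sum>s\<in>supp x. x s * chi (sem (Comp t s) u = Some v))"
      by (subst sum.reindex) (auto simp: inj_on_def lcomp_def)
    also have "\<dots> = (\<Sum>s\<in>supp x. \<Sum>w\<in>W. x s * chi (sem s u = Some w) * chi (sem t w = Some v))"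
      by (intro sum.cong refl) (simp add: pt sum_distrib_left mult.assoc del: sem.simps)
    also have "\<dots> = (\<Sum>w\<in>W. \<Sum>s\<in>supp x. x s * chi (sem s u = Some w) * chi (sem t w = Some v))"
      by (rule sum.swap)
    also have "\<dots> = (\<Sum>w\<in>W. ev x u w * chi (sem t w = Some v))"
      by (simp add: ev_def sum_distrib_right)
    also have "\<dots> = 0" using lcomp by (simp add: Inv_def)
    finally show ?thesis .
  qed
  then show ?case using lcomp sp fin2 finite_subset[OF sp fin2]
    by (auto simp: Inv_def typed_iff)
next
  case (rcomp m n x t p)
  let ?y = "rcomp x t"
  have fin: "finite (supp x)" using rcomp by (auto simp: Inv_def)
  have sp: "supp ?y \<subseteq> (\<lambda>s. Comp s t) ` supp x"
  proof
    fix s assume "s \<in> supp ?y"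
    then show "s \<in> (\<lambda>s. Comp s t) ` supp x" by (cases s) (auto simp: supp_def rcomp_def split: if_splits)
  qed
  have fin2: "finite ((\<lambda>s. Comp s t) ` supp x)" using fin by simp
  have "ev ?y u v = 0" for u v
  proof -
    have "ev ?y u v = (\<Sum>s'\<in>(\<lambda>s. Comp s t) ` supp x. ?y s' * chi (sem s' u = Some v))"
      by (rule ev_superset[OF fin2 sp])
    also have "\<dots> = (\<Sum>s\<in>supp x. x s * chi (sem (Comp s t) u = Some v))"
      by (subst sum.reindex) (auto simp: inj_on_def rcomp_def)
    also have "\<dots> = 0"
    proof (cases "sem t u")
      case None then show ?thesis by (simp add: chi_def)
    next
      case (Some w)
      then have "(\<Sum>s\<in>supp x. x s * chi (sem (Comp s t) u = Some v)) = ev x w v"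
        by (simp add: ev_def)
      then show ?thesis using rcomp by (simp add: Inv_def)
    qed
    finally show ?thesis .
  qed
  then show ?case using rcomp sp fin2 finite_subset[OF sp fin2]
    by (auto simp: Inv_def typed_iff)
next
  case (ltens m n x t p q)
  let ?y = "ltens t x"
  have fin: "finite (supp x)" using ltens by (auto simp: Inv_def)
  have sp: "supp ?y \<subseteq> Tens t ` supp x"
  proof
    fix s assume "s \<in> supp ?y"
    then show "s \<in> Tens t ` supp x" by (cases s) (auto simp: supp_def ltens_def split: if_splits)
  qed
  have fin2: "finite (Tens t ` supp x)" using fin by simp
  have "ev ?y u v = 0" for u v
  proof -
    have "ev ?y u v = (\<Sum>s'\<in>Tens t ` supp x. ?y s' * chi (sem s' u = Some v))"
      by (rule ev_superset[OF fin2 sp])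
    also have "\<dots> = (\<Sum>s\<in>supp x. x s * chi (sem (Tens t s) u = Some v))"
      by (subst sum.reindex) (auto simp: inj_on_def ltens_def)
    also have "\<dots> = 0"
    proof (cases "sem t (take (src t) u)")
      case None then show ?thesis by (simp add: chi_def)
    next
      case (Some a)
      have "(\<Sum>s\<in>supp x. x s * chi (sem (Tens t s) u = Some v))
          = (\<Sum>s\<in>supp x. x s * (chi (take (length a) v = a) * chi (sem s (drop (src t) u) = Some (drop (length a) v))))"
      proof (intro sum.cong refl)
        fix s assume "s \<in> supp x"
        have ai: "(a @ b' = v) \<longleftrightarrow> (take (length a) v = a \<and> b' = drop (length a) v)" for b'
          by (metis append_eq_conv_conj)
        show "x s * chi (sem (Tens t s) u = Some v) = x s * (chi (take (length a) v = a) * chi (sem s (drop (src t) u) = Some (drop (length a) v)))"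
          using Some by (cases "sem s (drop (src t) u)") (auto simp: chi_def ai)
      qed
      also have "\<dots> = chi (take (length a) v = a) * ev x (drop (src t) u) (drop (length a) v)"
        by (simp add: ev_def sum_distrib_left mult.assoc mult.left_commute)
      finally show ?thesis using ltens by (simp add: Inv_def)
    qed
    finally show ?thesis .
  qed
  then show ?case using ltens sp fin2 finite_subset[OF sp fin2]
    by (auto simp: Inv_def typed_iff)
next
  case (rtens m n x t p q)
  let ?y = "rtens x t"
  have fin: "finite (supp x)" using rtens by (auto simp: Inv_def)
  have ty: "s \<in> supp x \<Longrightarrow> src s = m" for s using rtens by (auto simp: Inv_def typed_iff)
  have sp: "supp ?y \<subseteq> (\<lambda>s. Tens s t) ` supp x"
  proof
    fix s assume "s \<in> supp ?y"
    then show "s \<in> (\<lambda>s. Tens s t) ` supp x" by (cases s) (auto simp: supp_def rtens_def split: if_splits)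
  qed
  have fin2: "finite ((\<lambda>s. Tens s t) ` supp x)" using fin by simp
  have "ev ?y u v = 0" for u v
  proof -
    have "ev ?y u v = (\<Sum>s'\<in>(\<lambda>s. Tens s t) ` supp x. ?y s' * chi (sem s' u = Some v))"
      by (rule ev_superset[OF fin2 sp])
    also have "\<dots> = (\<Sum>s\<in>supp x. x s * chi (sem (Tens s t) u = Some v))"
      by (subst sum.reindex) (auto simp: inj_on_def rtens_def)
    also have "\<dots> = 0"
    proof (cases "sem t (drop m u)")
      case None then show ?thesis using ty by (auto simp: chi_def split: option.splits intro!: sum.neutral)
    next
      case (Some b)
      define c where "c = length v - length b"
      have "(\<Sum>s\<in>supp x. x s * chi (sem (Tens s t) u = Some v))
          = (\<Sum>s\<in>supp x. x s * (chi (length b \<le> length v \<and> drop c v = b) * chi (sem s (take m u) = Some (take c v))))"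
      proof (intro sum.cong refl)
        fix s assume "s \<in> supp x"
        then have "src s = m" by (rule ty)
        moreover have "(a' @ b = v) \<longleftrightarrow> (length b \<le> length v \<and> drop c v = b \<and> a' = take c v)" for a'
          unfolding c_def by (rule app_split_r)
        ultimately show "x s * chi (sem (Tens s t) u = Some v)
          = x s * (chi (length b \<le> length v \<and> drop c v = b) * chi (sem s (take m u) = Some (take c v)))"
          using Some by (cases "sem s (take m u)") (auto simp: chi_def)
      qed
      also have "\<dots> = chi (length b \<le> length v \<and> drop c v = b) * ev x (take m u) (take c v)"
        by (simp add: ev_def sum_distrib_left mult.assoc mult.left_commute)
      finally show ?thesis using rtens by (simp add: Inv_def)
    qed
    finally show ?thesis .
  qed
  then show ?case using rtens sp fin2 finite_subset[OF sp fin2]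
    by (auto simp: Inv_def typed_iff)
qed

definition eqv :: "'k::field itself \<Rightarrow> tm \<Rightarrow> tm \<Rightarrow> bool" where
  "eqv K s t = (wf s \<and> wf t \<and> src s = src t \<and> tgt s = tgt t
      \<and> null (src s) (tgt s) (diff (ind s) (ind t) :: tm \<Rightarrow> 'k))"

definition Zr :: "'k::field itself \<Rightarrow> tm \<Rightarrow> bool" where
  "Zr K t = (wf t \<and> null (src t) (tgt t) (ind t :: tm \<Rightarrow> 'k))"

context
  fixes K :: "'k::field itself"
begin

lemma null_typed: "typed s m n \<Longrightarrow> wf s \<and> src s = m \<and> tgt s = n" by (simp add: typed_iff)

lemma eqv_refl: "wf s \<Longrightarrow> eqv K s s"
proof -
  assume "wf s"
  have "diff (ind s) (ind s) = (\<lambda>_. 0 :: 'k)" by (auto simp: diff_def)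
  then show ?thesis using \<open>wf s\<close> by (simp add: eqv_def null.zero)
qed

lemma eqv_sym: "eqv K s t \<Longrightarrow> eqv K t s"
proof -
  assume a: "eqv K s t"
  have "diff (ind t) (ind s) = (\<lambda>u. (-1) * diff (ind s) (ind t) u :: 'k)" by (auto simp: diff_def)
  then show ?thesis using a null.smult[of "src s" "tgt s" "diff (ind s) (ind t) :: tm \<Rightarrow> 'k" "-1"]
    by (auto simp: eqv_def)
qed

lemma eqv_trans[trans]: "eqv K s t \<Longrightarrow> eqv K t u \<Longrightarrow> eqv K s u"
proof -
  assume a: "eqv K s t" and b: "eqv K t u"
  have "diff (ind s) (ind u) = (\<lambda>v. diff (ind s) (ind t) v + diff (ind t) (ind u) v :: 'k)"
    by (auto simp: diff_def)
  then show ?thesis using a b null.add[of "src s" "tgt s" "diff (ind s) (ind t) :: tm \<Rightarrow> 'k" "diff (ind t) (ind u)"]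
    by (auto simp: eqv_def)
qed

lemma eqv_wf: "eqv K s t \<Longrightarrow> wf s \<and> wf t \<and> src s = src t \<and> tgt s = tgt t"
  by (simp add: eqv_def)

lemma eqv_compL: "eqv K s t \<Longrightarrow> wf g \<Longrightarrow> src g = tgt s \<Longrightarrow> eqv K (Comp g s) (Comp g t)"
proof -
  assume a: "eqv K s t" "wf g" "src g = tgt s"
  have "lcomp g (diff (ind s) (ind t) :: tm \<Rightarrow> 'k) = diff (ind (Comp g s)) (ind (Comp g t))"
    by (rule ext) (auto simp: lcomp_def diff_def ind_def split: tm.splits)
  then show ?thesis using a null.lcomp[of "src s" "tgt s" "diff (ind s) (ind t) :: tm \<Rightarrow> 'k" g "tgt g"]
    by (auto simp: eqv_def typed_iff)
qed

lemma eqv_compR: "eqv K s t \<Longrightarrow> wf f \<Longrightarrow> tgt f = src s \<Longrightarrow> eqv K (Comp s f) (Comp t f)"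
proof -
  assume a: "eqv K s t" "wf f" "tgt f = src s"
  have "rcomp (diff (ind s) (ind t) :: tm \<Rightarrow> 'k) f = diff (ind (Comp s f)) (ind (Comp t f))"
    by (rule ext) (auto simp: rcomp_def diff_def ind_def split: tm.splits)
  then show ?thesis using a null.rcomp[of "src s" "tgt s" "diff (ind s) (ind t) :: tm \<Rightarrow> 'k" f "src f"]
    by (auto simp: eqv_def typed_iff)
qed

lemma eqv_tensL: "eqv K s t \<Longrightarrow> wf g \<Longrightarrow> eqv K (Tens g s) (Tens g t)"
proof -
  assume a: "eqv K s t" "wf g"
  have "ltens g (diff (ind s) (ind t) :: tm \<Rightarrow> 'k) = diff (ind (Tens g s)) (ind (Tens g t))"
    by (rule ext) (auto simp: ltens_def diff_def ind_def split: tm.splits)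
  then show ?thesis using a null.ltens[of "src s" "tgt s" "diff (ind s) (ind t) :: tm \<Rightarrow> 'k" g "src g" "tgt g"]
    by (auto simp: eqv_def typed_iff)
qed

lemma eqv_tensR: "eqv K s t \<Longrightarrow> wf g \<Longrightarrow> eqv K (Tens s g) (Tens t g)"
proof -
  assume a: "eqv K s t" "wf g"
  have "rtens (diff (ind s) (ind t) :: tm \<Rightarrow> 'k) g = diff (ind (Tens s g)) (ind (Tens t g))"
    by (rule ext) (auto simp: rtens_def diff_def ind_def split: tm.splits)
  then show ?thesis using a null.rtens[of "src s" "tgt s" "diff (ind s) (ind t) :: tm \<Rightarrow> 'k" g "src g" "tgt g"]
    by (auto simp: eqv_def typed_iff)
qed

lemma eqv_comp: "eqv K s s' \<Longrightarrow> eqv K t t' \<Longrightarrow> src s = tgt t \<Longrightarrow> eqv K (Comp s t) (Comp s' t')"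
  by (metis eqv_compL eqv_compR eqv_trans eqv_wf)

lemma eqv_tens: "eqv K s s' \<Longrightarrow> eqv K t t' \<Longrightarrow> eqv K (Tens s t) (Tens s' t')"
  by (metis eqv_tensL eqv_tensR eqv_trans eqv_wf)

lemma ax_assoc: "wf f \<Longrightarrow> wf g \<Longrightarrow> wf h \<Longrightarrow> src g = tgt f \<Longrightarrow> src h = tgt g \<Longrightarrow>
   eqv K (Comp h (Comp g f)) (Comp (Comp h g) f)"
  using null.assoc[of f "src f" "tgt f" g "tgt g" h "tgt h"] by (auto simp: eqv_def typed_iff)

lemma ax_idl: "wf f \<Longrightarrow> eqv K (Comp (Idn (tgt f)) f) f"
  using null.idl[of f "src f" "tgt f"] by (auto simp: eqv_def typed_iff)

lemma ax_idr: "wf f \<Longrightarrow> eqv K (Comp f (Idn (src f))) f"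
  using null.idr[of f "src f" "tgt f"] by (auto simp: eqv_def typed_iff)

lemma ax_tassoc: "wf f \<Longrightarrow> wf g \<Longrightarrow> wf h \<Longrightarrow> eqv K (Tens (Tens f g) h) (Tens f (Tens g h))"
  using null.tassoc[of f "src f" "tgt f" g "src g" "tgt g" h "src h" "tgt h"]
  by (auto simp: eqv_def typed_iff add.assoc)

lemma ax_tunitl: "wf f \<Longrightarrow> eqv K (Tens (Idn 0) f) f"
  using null.tunitl[of f "src f" "tgt f"] by (auto simp: eqv_def typed_iff)

lemma ax_tunitr: "wf f \<Longrightarrow> eqv K (Tens f (Idn 0)) f"
  using null.tunitr[of f "src f" "tgt f"] by (auto simp: eqv_def typed_iff)

lemma ax_tid: "eqv K (Tens (Idn m) (Idn n)) (Idn (m + n))"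
  using null.tid[of m n] by (auto simp: eqv_def typed_iff)

lemma ax_inter: "wf f \<Longrightarrow> wf g \<Longrightarrow> wf h \<Longrightarrow> wf k \<Longrightarrow> src g = tgt f \<Longrightarrow> src k = tgt h \<Longrightarrow>
   eqv K (Tens (Comp g f) (Comp k h)) (Comp (Tens g k) (Tens f h))"
  using null.interchange[of f "src f" "tgt f" g "tgt g" h "src h" "tgt h" k "tgt k"]
  by (auto simp: eqv_def typed_iff)

lemma ax_circ: "eqv K (Comp Cap Cup) (Idn 0)"
  using null.circ by (auto simp: eqv_def)

lemma Zr_zig1: "Zr K (Comp (Tens (Idn 1) Cap) (Tens Cup (Idn 1)))"
  using null.zig1 by (auto simp: Zr_def)

lemma Zr_zig2: "Zr K (Comp (Tens Cap (Idn 1)) (Tens (Idn 1) Cup))"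
  using null.zig2 by (auto simp: Zr_def)

lemma Zr_eqv: "eqv K s t \<Longrightarrow> Zr K t \<Longrightarrow> Zr K s"
proof -
  assume a: "eqv K s t" "Zr K t"
  have "ind s = (\<lambda>v. diff (ind s) (ind t) v + ind t v :: 'k)" by (auto simp: diff_def)
  then show ?thesis using a null.add[of "src s" "tgt s" "diff (ind s) (ind t) :: tm \<Rightarrow> 'k" "ind t"]
    by (auto simp: eqv_def Zr_def)
qed

lemma Zr_compL: "Zr K s \<Longrightarrow> wf g \<Longrightarrow> src g = tgt s \<Longrightarrow> Zr K (Comp g s)"
proof -
  assume a: "Zr K s" "wf g" "src g = tgt s"
  have "lcomp g (ind s :: tm \<Rightarrow> 'k) = ind (Comp g s)"
    by (rule ext) (auto simp: lcomp_def ind_def split: tm.splits)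
  then show ?thesis using a null.lcomp[of "src s" "tgt s" "ind s :: tm \<Rightarrow> 'k" g "tgt g"]
    by (auto simp: Zr_def typed_iff)
qed

lemma Zr_compR: "Zr K s \<Longrightarrow> wf f \<Longrightarrow> tgt f = src s \<Longrightarrow> Zr K (Comp s f)"
proof -
  assume a: "Zr K s" "wf f" "tgt f = src s"
  have "rcomp (ind s :: tm \<Rightarrow> 'k) f = ind (Comp s f)"
    by (rule ext) (auto simp: rcomp_def ind_def split: tm.splits)
  then show ?thesis using a null.rcomp[of "src s" "tgt s" "ind s :: tm \<Rightarrow> 'k" f "src f"]
    by (auto simp: Zr_def typed_iff)
qed

lemma Zr_tensL: "Zr K s \<Longrightarrow> wf g \<Longrightarrow> Zr K (Tens g s)"
proof -
  assume a: "Zr K s" "wf g"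
  have "ltens g (ind s :: tm \<Rightarrow> 'k) = ind (Tens g s)"
    by (rule ext) (auto simp: ltens_def ind_def split: tm.splits)
  then show ?thesis using a null.ltens[of "src s" "tgt s" "ind s :: tm \<Rightarrow> 'k" g "src g" "tgt g"]
    by (auto simp: Zr_def typed_iff)
qed

lemma Zr_tensR: "Zr K s \<Longrightarrow> wf g \<Longrightarrow> Zr K (Tens s g)"
proof -
  assume a: "Zr K s" "wf g"
  have "rtens (ind s :: tm \<Rightarrow> 'k) g = ind (Tens s g)"
    by (rule ext) (auto simp: rtens_def ind_def split: tm.splits)
  then show ?thesis using a null.rtens[of "src s" "tgt s" "ind s :: tm \<Rightarrow> 'k" g "src g" "tgt g"]
    by (auto simp: Zr_def typed_iff)
qed

lemma eqv_sem: "eqv K s t \<Longrightarrow> sem s = sem t"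
proof -
  assume a: "eqv K s t"
  show ?thesis
  proof (cases "s = t")
    case False
    let ?x = "diff (ind s) (ind t) :: tm \<Rightarrow> 'k"
    have I: "Inv (src s) (tgt s) ?x" using a null_Inv by (auto simp: eqv_def)
    have sp: "supp ?x \<subseteq> {s, t}" by (auto simp: supp_def diff_def ind_def)
    have "ev ?x u v = chi (sem s u = Some v) - chi (sem t u = Some v)" for u v
      using False by (subst ev_superset[OF _ sp]) (auto simp: diff_def ind_def)
    then have e: "(chi (sem s u = Some v) :: 'k) = chi (sem t u = Some v)" for u v
      using I by (simp add: Inv_def)
    show ?thesis
    proof (rule ext)
      fix u
      show "sem s u = sem t u"
      proof (cases "sem s u")
        case None
        then show ?thesis using e[of u "the (sem t u)"] by (cases "sem t u") (auto simp: chi_def)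
      next
        case (Some v)
        then show ?thesis using e[of u v] by (auto simp: chi_def split: if_splits)
      qed
    qed
  qed simp
qed

lemma tl_eq_eqv: "typed s m n \<Longrightarrow> typed t m n \<Longrightarrow> tl_eq K m n s t \<longleftrightarrow> eqv K s t"
  by (auto simp: tl_eq_def eqv_def typed_iff)

lemma tl_nonzero_Zr: "typed s m n \<Longrightarrow> tl_nonzero K m n s \<longleftrightarrow> \<not> Zr K s"
  by (auto simp: tl_nonzero_def Zr_def typed_iff)

end

fun Fl :: "tm list \<Rightarrow> tm" where
  "Fl [] = Idn 0" | "Fl (x # xs) = Tens x (Fl xs)"

lemma Fl_props[simp]: "src (Fl xs) = sum_list (map src xs)" "tgt (Fl xs) = sum_list (map tgt xs)"
  "wf (Fl xs) = (\<forall>x\<in>set xs. wf x)"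
  by (induction xs) auto

definition Lay :: "tm \<Rightarrow> nat \<Rightarrow> nat \<Rightarrow> tm" where "Lay g p q = Fl [Idn p, g, Idn q]"

lemma Lay_props[simp]: "src (Lay g p q) = p + src g + q" "tgt (Lay g p q) = p + tgt g + q"
  "wf (Lay g p q) = wf g"
  by (auto simp: Lay_def)

context
  fixes K :: "'k::field itself"
begin

lemma Fl_single: "wf x \<Longrightarrow> eqv K (Fl [x]) x"
  by (simp add: ax_tunitr)

lemma Fl_app: "\<forall>x\<in>set xs. wf x \<Longrightarrow> \<forall>y\<in>set ys. wf y \<Longrightarrow> eqv K (Tens (Fl xs) (Fl ys)) (Fl (xs @ ys))"
proof (induction xs)
  case Nil then show ?case by (simp add: ax_tunitl)
next
  case (Cons x xs)
  have "eqv K (Tens (Fl (x # xs)) (Fl ys)) (Tens x (Tens (Fl xs) (Fl ys)))"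
    using Cons.prems by (simp add: ax_tassoc)
  also have "eqv K \<dots> (Tens x (Fl (xs @ ys)))"
    using Cons by (intro eqv_tensL) auto
  finally show ?case by simp
qed

lemma Fl_pre: "eqv K (Fl A) (Fl B) \<Longrightarrow> \<forall>x\<in>set xs. wf x \<Longrightarrow> eqv K (Fl (xs @ A)) (Fl (xs @ B))"
  by (induction xs) (auto intro: eqv_tensL)

lemma Fl_pw: "list_all2 (eqv K) xs ys \<Longrightarrow> eqv K (Fl xs) (Fl ys)"
  by (induction rule: list_all2_induct) (auto intro: eqv_tens eqv_refl)

lemma idid: "eqv K (Comp (Idn n) (Idn n)) (Idn n)"
  using ax_idl[of "Idn n"] by simp

lemma Fl_comp: "list_all2 (\<lambda>x y. wf x \<and> wf y \<and> src x = tgt y) xs ys \<Longrightarrow>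
   eqv K (Comp (Fl xs) (Fl ys)) (Fl (map2 Comp xs ys))"
proof (induction rule: list_all2_induct)
  case Nil then show ?case by (simp add: idid)
next
  case (Cons x xs y ys)
  have w: "\<forall>x\<in>set xs. wf x" "\<forall>y\<in>set ys. wf y" "sum_list (map src xs) = sum_list (map tgt ys)"
    using Cons.hyps(2) by (induction rule: list_all2_induct) auto
  have "eqv K (Comp (Fl (x # xs)) (Fl (y # ys))) (Tens (Comp x y) (Comp (Fl xs) (Fl ys)))"
    using Cons w by (simp add: eqv_sym ax_inter)
  also have "eqv K \<dots> (Tens (Comp x y) (Fl (map2 Comp xs ys)))"
    using Cons w by (intro eqv_tensL) auto
  finally show ?case by simp
qed

lemma Fl_comp': "list_all2 (\<lambda>x y. wf x \<and> wf y \<and> src x = tgt y) xs ys \<Longrightarrow> zs = map2 Comp xs ys \<Longrightarrow>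
   eqv K (Comp (Fl xs) (Fl ys)) (Fl zs)"
  using Fl_comp by simp

lemma Fl_merge: "\<forall>y\<in>set ys. wf y \<Longrightarrow> eqv K (Fl (Idn m # Idn n # ys)) (Fl (Idn (m + n) # ys))"
proof -
  assume w: "\<forall>y\<in>set ys. wf y"
  have "eqv K (Fl (Idn m # Idn n # ys)) (Tens (Tens (Idn m) (Idn n)) (Fl ys))"
    using w by (simp add: eqv_sym ax_tassoc)
  also have "eqv K \<dots> (Fl (Idn (m + n) # ys))"
    using w by (simp add: eqv_tensR ax_tid)
  finally show ?thesis .
qed

lemma Fl_group: "wf x \<Longrightarrow> wf y \<Longrightarrow> \<forall>z\<in>set ys. wf z \<Longrightarrow> eqv K (Fl (x # y # ys)) (Fl (Tens x y # ys))"
  by (simp add: eqv_sym ax_tassoc)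

lemma Fl_drop0: "\<forall>z\<in>set ys. wf z \<Longrightarrow> eqv K (Fl (Idn 0 # ys)) (Fl ys)"
  by (simp add: ax_tunitl)

lemma Fl3: "eqv K (Fl [Idn a, Idn b, Idn c]) (Idn (a + b + c))"
proof -
  have "eqv K (Fl [Idn a, Idn b, Idn c]) (Fl [Idn (a + b), Idn c])" by (rule Fl_merge) simp
  also have "eqv K \<dots> (Fl [Idn (a + b + c)])" by (rule Fl_merge) simp
  also have "eqv K \<dots> (Idn (a + b + c))" by (rule Fl_single) simp
  finally show ?thesis .
qed

lemma FC_aux1: "wf g \<Longrightarrow> eqv K (Lay g p (r + d + s)) (Fl [Idn p, g, Idn r, Idn d, Idn s])"
proof -
  assume w: "wf g"
  have "eqv K (Fl [Idn r, Idn d, Idn s]) (Fl [Idn (r + d + s)])"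
    using Fl3[of r d s] Fl_single[of "Idn (r+d+s)"] eqv_sym eqv_trans by fastforce
  then have "eqv K (Fl ([Idn p, g] @ [Idn r, Idn d, Idn s])) (Fl ([Idn p, g] @ [Idn (r + d + s)]))"
    using w by (intro Fl_pre) auto
  then show ?thesis by (simp add: Lay_def eqv_sym)
qed

lemma FC_aux2: "wf h \<Longrightarrow> eqv K (Lay h (p + a + r) s) (Fl [Idn p, Idn a, Idn r, h, Idn s])"
proof -
  assume w: "wf h"
  have "eqv K (Fl [Idn p, Idn a, Idn r, h, Idn s]) (Fl [Idn (p + a), Idn r, h, Idn s])"
    using w by (intro Fl_merge) auto
  also have "eqv K \<dots> (Fl [Idn (p + a + r), h, Idn s])"
    using w by (intro Fl_merge) auto
  finally show ?thesis by (simp add: Lay_def eqv_sym)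
qed

lemma FC_aux3: "wf g \<Longrightarrow> eqv K (Lay g p (r + d + s)) (Fl [Idn p, g, Idn r, Idn d, Idn s])"
  by (rule FC_aux1)

lemma FC_L: "wf g \<Longrightarrow> wf h \<Longrightarrow>
  eqv K (Comp (Lay g p (r + tgt h + s)) (Lay h (p + src g + r) s)) (Fl [Idn p, g, Idn r, h, Idn s])"
proof -
  assume w: "wf g" "wf h"
  have "eqv K (Comp (Lay g p (r + tgt h + s)) (Lay h (p + src g + r) s))
     (Comp (Fl [Idn p, g, Idn r, Idn (tgt h), Idn s]) (Fl [Idn p, Idn (src g), Idn r, h, Idn s]))"
    using w by (intro eqv_comp FC_aux1 FC_aux2) auto
  also have "eqv K \<dots> (Fl [Comp (Idn p) (Idn p), Comp g (Idn (src g)), Comp (Idn r) (Idn r),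
       Comp (Idn (tgt h)) h, Comp (Idn s) (Idn s)])"
    using w by (intro Fl_comp') auto
  also have "eqv K \<dots> (Fl [Idn p, g, Idn r, h, Idn s])"
    using w by (intro Fl_pw) (auto simp: idid ax_idl ax_idr)
  finally show ?thesis .
qed

lemma FC_R: "wf g \<Longrightarrow> wf h \<Longrightarrow>
  eqv K (Comp (Lay h (p + tgt g + r) s) (Lay g p (r + src h + s))) (Fl [Idn p, g, Idn r, h, Idn s])"
proof -
  assume w: "wf g" "wf h"
  have "eqv K (Comp (Lay h (p + tgt g + r) s) (Lay g p (r + src h + s)))
     (Comp (Fl [Idn p, Idn (tgt g), Idn r, h, Idn s]) (Fl [Idn p, g, Idn r, Idn (src h), Idn s]))"
    using w by (intro eqv_comp FC_aux1 FC_aux2) auto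
  also have "eqv K \<dots> (Fl [Comp (Idn p) (Idn p), Comp (Idn (tgt g)) g, Comp (Idn r) (Idn r),
       Comp h (Idn (src h)), Comp (Idn s) (Idn s)])"
    using w by (intro Fl_comp') auto
  also have "eqv K \<dots> (Fl [Idn p, g, Idn r, h, Idn s])"
    using w by (intro Fl_pw) (auto simp: idid ax_idl ax_idr)
  finally show ?thesis .
qed

lemma FC: "wf g \<Longrightarrow> wf h \<Longrightarrow>
  eqv K (Comp (Lay g p (r + tgt h + s)) (Lay h (p + src g + r) s))
        (Comp (Lay h (p + tgt g + r) s) (Lay g p (r + src h + s)))"
  by (meson FC_L FC_R eqv_sym eqv_trans)

lemma Lay_cancel: "eqv K (Comp (Lay Cap p q) (Lay Cup p q)) (Idn (p + q))"
proof -
  have "eqv K (Comp (Lay Cap p q) (Lay Cup p q)) (Fl [Comp (Idn p) (Idn p), Comp Cap Cup, Comp (Idn q) (Idn q)])"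
    unfolding Lay_def by (intro Fl_comp') auto
  also have "eqv K \<dots> (Fl [Idn p, Idn 0, Idn q])"
    by (intro Fl_pw) (auto simp: idid ax_circ)
  also have "eqv K \<dots> (Idn (p + q))" using Fl3[of p 0 q] by simp
  finally show ?thesis .
qed

lemma Zr_Fl: "Zr K x \<Longrightarrow> \<forall>y\<in>set (xs @ ys). wf y \<Longrightarrow> Zr K (Fl (xs @ x # ys))"
proof (induction xs)
  case Nil then show ?case by (auto intro: Zr_tensR)
next
  case (Cons a xs) then show ?case by (auto intro: Zr_tensL)
qed

lemma Lay_zig1: "Zr K (Comp (Lay Cap (p + 1) q) (Lay Cup p (q + 1)))"
proof -
  have "eqv K (Lay Cap (p + 1) q) (Fl ([Idn p] @ [Tens (Idn 1) Cap, Idn q]))"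
  proof -
    have "eqv K (Lay Cap (p + 1) q) (Fl [Idn p, Idn 1, Cap, Idn q])"
      unfolding Lay_def by (rule eqv_sym, rule Fl_merge) auto
    also have "eqv K \<dots> (Fl ([Idn p] @ [Tens (Idn 1) Cap, Idn q]))"
      using Fl_pre[OF Fl_group[of "Idn 1" Cap "[Idn q]"], of "[Idn p]"] by simp
    finally show ?thesis .
  qed
  moreover have "eqv K (Lay Cup p (q + 1)) (Fl ([Idn p] @ [Tens Cup (Idn 1), Idn q]))"
  proof -
    have "eqv K (Fl [Cup, Idn (1 + q)]) (Fl ([Cup] @ [Idn 1, Idn q]))"
      using Fl_pre[OF Fl_merge[of "[]" 1 q], of "[Cup]"] by (simp add: eqv_sym)
    also have "eqv K \<dots> (Fl [Tens Cup (Idn 1), Idn q])" using Fl_group[of Cup "Idn 1" "[Idn q]"] by simp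
    finally have "eqv K (Fl ([Idn p] @ [Cup, Idn (1 + q)])) (Fl ([Idn p] @ [Tens Cup (Idn 1), Idn q]))"
      by (intro Fl_pre) auto
    then show ?thesis by (simp add: Lay_def add.commute)
  qed
  ultimately have "eqv K (Comp (Lay Cap (p + 1) q) (Lay Cup p (q + 1)))
     (Comp (Fl [Idn p, Tens (Idn 1) Cap, Idn q]) (Fl [Idn p, Tens Cup (Idn 1), Idn q]))"
    by (intro eqv_comp) auto
  also have "eqv K \<dots> (Fl ([Comp (Idn p) (Idn p)] @ Comp (Tens (Idn 1) Cap) (Tens Cup (Idn 1)) # [Comp (Idn q) (Idn q)]))"
    by (intro Fl_comp') auto
  finally show ?thesis
    by (rule Zr_eqv) (intro Zr_Fl Zr_zig1; simp)
qed

lemma Lay_zig2: "Zr K (Comp (Lay Cap p (q + 1)) (Lay Cup (p + 1) q))"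
proof -
  have "eqv K (Lay Cup (p + 1) q) (Fl ([Idn p] @ [Tens (Idn 1) Cup, Idn q]))"
  proof -
    have "eqv K (Lay Cup (p + 1) q) (Fl [Idn p, Idn 1, Cup, Idn q])"
      unfolding Lay_def by (rule eqv_sym, rule Fl_merge) auto
    also have "eqv K \<dots> (Fl ([Idn p] @ [Tens (Idn 1) Cup, Idn q]))"
      using Fl_pre[OF Fl_group[of "Idn 1" Cup "[Idn q]"], of "[Idn p]"] by simp
    finally show ?thesis .
  qed
  moreover have "eqv K (Lay Cap p (q + 1)) (Fl ([Idn p] @ [Tens Cap (Idn 1), Idn q]))"
  proof -
    have "eqv K (Fl [Cap, Idn (1 + q)]) (Fl ([Cap] @ [Idn 1, Idn q]))"
      using Fl_pre[OF Fl_merge[of "[]" 1 q], of "[Cap]"] by (simp add: eqv_sym)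
    also have "eqv K \<dots> (Fl [Tens Cap (Idn 1), Idn q])" using Fl_group[of Cap "Idn 1" "[Idn q]"] by simp
    finally have "eqv K (Fl ([Idn p] @ [Cap, Idn (1 + q)])) (Fl ([Idn p] @ [Tens Cap (Idn 1), Idn q]))"
      by (intro Fl_pre) auto
    then show ?thesis by (simp add: Lay_def add.commute)
  qed
  ultimately have "eqv K (Comp (Lay Cap p (q + 1)) (Lay Cup (p + 1) q))
     (Comp (Fl [Idn p, Tens Cap (Idn 1), Idn q]) (Fl [Idn p, Tens (Idn 1) Cup, Idn q]))"
    by (intro eqv_comp) auto
  also have "eqv K \<dots> (Fl ([Comp (Idn p) (Idn p)] @ Comp (Tens Cap (Idn 1)) (Tens (Idn 1) Cup) # [Comp (Idn q) (Idn q)]))"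
    by (intro Fl_comp') auto
  finally show ?thesis
    by (rule Zr_eqv) (intro Zr_Fl Zr_zig2; simp)
qed

lemma LayR: "wf g \<Longrightarrow> eqv K (Tens (Lay g p q) (Idn r)) (Lay g p (q + r))"
proof -
  assume w: "wf g"
  have "eqv K (Tens (Lay g p q) (Idn r)) (Tens (Fl [Idn p, g, Idn q]) (Fl [Idn r]))"
    unfolding Lay_def using w by (intro eqv_tensL eqv_sym[OF Fl_single]) auto
  also have "eqv K \<dots> (Fl ([Idn p, g] @ [Idn q, Idn r]))"
    using w Fl_app[of "[Idn p, g, Idn q]" "[Idn r]"] by simp
  also have "eqv K \<dots> (Fl ([Idn p, g] @ [Idn (q + r)]))"
    using w by (intro Fl_pre Fl_merge) auto
  finally show ?thesis by (simp add: Lay_def)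
qed

lemma LayL: "wf g \<Longrightarrow> eqv K (Tens (Idn r) (Lay g p q)) (Lay g (r + p) q)"
proof -
  assume w: "wf g"
  have "eqv K (Tens (Idn r) (Lay g p q)) (Tens (Fl [Idn r]) (Fl [Idn p, g, Idn q]))"
    unfolding Lay_def using w by (intro eqv_tensR eqv_sym[OF Fl_single]) auto
  also have "eqv K \<dots> (Fl [Idn r, Idn p, g, Idn q])"
    using w Fl_app[of "[Idn r]" "[Idn p, g, Idn q]"] by simp
  also have "eqv K \<dots> (Fl [Idn (r + p), g, Idn q])"
    using w by (intro Fl_merge) auto
  finally show ?thesis by (simp add: Lay_def)
qed

lemma Lay00: "wf g \<Longrightarrow> eqv K (Lay g 0 0) g"
proof -
  assume w: "wf g"
  have "eqv K (Lay g 0 0) (Fl [g, Idn 0])" unfolding Lay_def using w by (intro Fl_drop0) auto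
  also have "eqv K \<dots> (Fl [g])" using w by (simp add: eqv_tensL ax_tunitr)
  also have "eqv K \<dots> g" using w by (rule Fl_single)
  finally show ?thesis .
qed

lemma T1: "wf f \<Longrightarrow> wf g \<Longrightarrow> eqv K (Tens f g) (Comp (Tens (Idn (tgt f)) g) (Tens f (Idn (src g))))"
proof -
  assume w: "wf f" "wf g"
  have "eqv K (Tens f g) (Tens (Comp (Idn (tgt f)) f) (Comp g (Idn (src g))))"
    using w by (intro eqv_tens eqv_sym[OF ax_idl] eqv_sym[OF ax_idr])
  also have "eqv K \<dots> (Comp (Tens (Idn (tgt f)) g) (Tens f (Idn (src g))))"
    using w by (intro ax_inter) auto
  finally show ?thesis .
qed

lemma T2: "wf f \<Longrightarrow> wf g \<Longrightarrow> eqv K (Tens f g) (Comp (Tens f (Idn (tgt g))) (Tens (Idn (src f)) g))"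
proof -
  assume w: "wf f" "wf g"
  have "eqv K (Tens f g) (Tens (Comp f (Idn (src f))) (Comp (Idn (tgt g)) g))"
    using w by (intro eqv_tens eqv_sym[OF ax_idl] eqv_sym[OF ax_idr])
  also have "eqv K \<dots> (Comp (Tens f (Idn (tgt g))) (Tens (Idn (src f)) g))"
    using w by (intro ax_inter) auto
  finally show ?thesis .
qed

end

fun CW :: "nat \<Rightarrow> nat list \<Rightarrow> tm" where
  "CW n [] = Idn n"
| "CW n (i # cs) = Comp (Lay Cup i (n + 2 * length cs - i)) (CW n cs)"

fun DW :: "nat \<Rightarrow> nat list \<Rightarrow> tm" where
  "DW n [] = Idn n"
| "DW n (i # ds) = Comp (DW n ds) (Lay Cap i (n + 2 * length ds - i))"

fun valid :: "nat \<Rightarrow> nat list \<Rightarrow> bool" where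
  "valid n [] = True"
| "valid n (i # cs) = (i \<le> n + 2 * length cs \<and> valid n cs)"

lemma CW_props: "valid n cs \<Longrightarrow> wf (CW n cs) \<and> src (CW n cs) = n \<and> tgt (CW n cs) = n + 2 * length cs"
  by (induction cs) auto

lemma DW_props: "valid n ds \<Longrightarrow> wf (DW n ds) \<and> tgt (DW n ds) = n \<and> src (DW n ds) = n + 2 * length ds"
  by (induction ds) auto

lemma CW_nocap: "no_cap (CW n cs)"
  by (induction cs) (auto simp: Lay_def)

lemma DW_nocup: "no_cup (DW n ds)"
  by (induction ds) (auto simp: Lay_def)

lemma valid_app: "valid n (cs1 @ cs2) = (valid (n + 2 * length cs2) cs1 \<and> valid n cs2)"
  by (induction cs1) (auto simp: algebra_simps)

lemma valid_wid: "valid n cs \<Longrightarrow> valid (n + p) cs"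
  by (induction cs) auto

lemma valid_shift: "valid n cs \<Longrightarrow> valid (p + n) (map ((+) p) cs)"
  by (induction cs) auto

context
  fixes K :: "'k::field itself"
begin

lemma cupcomm: "j + 2 \<le> i \<Longrightarrow> i \<le> w + 2 \<Longrightarrow>
  eqv K (Comp (Lay Cup i (w + 2 - i)) (Lay Cup j (w - j)))
        (Comp (Lay Cup j (w + 2 - j)) (Lay Cup (i - 2) (w + 2 - i)))"
proof -
  assume a: "j + 2 \<le> i" "i \<le> w + 2"
  obtain r s where rs: "i = j + 2 + r" "w = j + r + s"
    using a by (intro that[of "i - j - 2" "w + 2 - i"]) auto
  show ?thesis using FC[where K=K and g=Cup and h=Cup and p=j and r=r and s=s] unfolding rs
    by (simp add: eqv_sym algebra_simps)
qed

lemma capcomm: "j + 2 \<le> i \<Longrightarrow> i \<le> w + 2 \<Longrightarrow>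
  eqv K (Comp (Lay Cap j (w - j)) (Lay Cap i (w + 2 - i)))
        (Comp (Lay Cap (i - 2) (w + 2 - i)) (Lay Cap j (w + 2 - j)))"
proof -
  assume a: "j + 2 \<le> i" "i \<le> w + 2"
  obtain r s where rs: "i = j + 2 + r" "w = j + r + s"
    using a by (intro that[of "i - j - 2" "w + 2 - i"]) auto
  show ?thesis using FC[where K=K and g=Cap and h=Cap and p=j and r=r and s=s] unfolding rs
    by (simp add: algebra_simps)
qed

lemma mixcomm1: "i + 2 \<le> j \<Longrightarrow> j \<le> w \<Longrightarrow>
  eqv K (Comp (Lay Cap i (w - i)) (Lay Cup j (w - j)))
        (Comp (Lay Cup (j - 2) (w - j)) (Lay Cap i (w - 2 - i)))"
proof -
  assume a: "i + 2 \<le> j" "j \<le> w"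
  obtain r s where rs: "j = i + 2 + r" "w = i + 2 + r + s"
    using a by (intro that[of "j - i - 2" "w - j"]) auto
  show ?thesis using FC[where K=K and g=Cap and h=Cup and p=i and r=r and s=s] unfolding rs
    by (simp add: algebra_simps)
qed

lemma mixcomm2: "j + 2 \<le> i \<Longrightarrow> i \<le> w \<Longrightarrow>
  eqv K (Comp (Lay Cap i (w - i)) (Lay Cup j (w - j)))
        (Comp (Lay Cup j (w - 2 - j)) (Lay Cap (i - 2) (w - i)))"
proof -
  assume a: "j + 2 \<le> i" "i \<le> w"
  obtain r s where rs: "i = j + 2 + r" "w = j + 2 + r + s"
    using a by (intro that[of "i - j - 2" "w - i"]) auto
  show ?thesis using FC[where K=K and g=Cup and h=Cap and p=j and r=r and s=s] unfolding rs
    by (simp add: eqv_sym algebra_simps)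
qed

end

context
  fixes K :: "'k::field itself"
begin

lemma CW_app: "valid (n + 2 * length cs2) cs1 \<Longrightarrow> valid n cs2 \<Longrightarrow>
  eqv K (Comp (CW (n + 2 * length cs2) cs1) (CW n cs2)) (CW n (cs1 @ cs2))"
proof (induction cs1)
  case Nil
  then show ?case using ax_idl[where K=K and f="CW n cs2"] CW_props[of n cs2] by simp
next
  case (Cons i cs1)
  let ?L = "Lay Cup i (n + 2 * length cs2 + 2 * length cs1 - i)"
  have v: "valid (n + 2 * length cs2) cs1" "i \<le> n + 2 * length cs2 + 2 * length cs1" using Cons by auto
  have "eqv K (Comp (CW (n + 2 * length cs2) (i # cs1)) (CW n cs2)) (Comp ?L (Comp (CW (n + 2 * length cs2) cs1) (CW n cs2)))"
    using CW_props[OF v(1)] CW_props[OF Cons.prems(2)] v by (simp add: eqv_sym ax_assoc)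
  also have "eqv K \<dots> (Comp ?L (CW n (cs1 @ cs2)))"
    using Cons v CW_props[OF v(1)] by (intro eqv_compL) auto
  finally show ?case by (simp add: algebra_simps)
qed

lemma DW_app: "valid (n + 2 * length ds1) ds2 \<Longrightarrow> valid n ds1 \<Longrightarrow>
  eqv K (Comp (DW n ds1) (DW (n + 2 * length ds1) ds2)) (DW n (ds2 @ ds1))"
proof (induction ds2)
  case Nil
  then show ?case using ax_idr[where K=K and f="DW n ds1"] DW_props[of n ds1] by simp
next
  case (Cons i ds2)
  let ?L = "Lay Cap i (n + 2 * length ds1 + 2 * length ds2 - i)"
  have v: "valid (n + 2 * length ds1) ds2" "i \<le> n + 2 * length ds1 + 2 * length ds2" using Cons by auto
  have "eqv K (Comp (DW n ds1) (DW (n + 2 * length ds1) (i # ds2))) (Comp (Comp (DW n ds1) (DW (n + 2 * length ds1) ds2)) ?L)"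
    using DW_props[OF v(1)] DW_props[OF Cons.prems(2)] v by (simp add: ax_assoc)
  also have "eqv K \<dots> (Comp (DW n (ds2 @ ds1)) ?L)"
    using Cons v DW_props[OF v(1)] by (intro eqv_compR) auto
  finally show ?case by (simp add: algebra_simps)
qed

lemma CW_tensR: "valid n cs \<Longrightarrow> eqv K (Tens (CW n cs) (Idn p)) (CW (n + p) cs)"
proof (induction cs)
  case Nil then show ?case by (simp add: ax_tid)
next
  case (Cons i cs)
  let ?L = "Lay Cup i (n + 2 * length cs - i)"
  have v: "valid n cs" "i \<le> n + 2 * length cs" using Cons by auto
  note pr = CW_props[OF v(1)]
  have "eqv K (Tens (CW n (i # cs)) (Idn p)) (Tens (Comp ?L (CW n cs)) (Comp (Idn p) (Idn p)))"
    using pr v unfolding CW.simps DW.simps by (intro eqv_tensL eqv_sym[OF idid]) auto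
  also have "eqv K \<dots> (Comp (Tens ?L (Idn p)) (Tens (CW n cs) (Idn p)))"
    using pr v by (intro ax_inter) auto
  also have "eqv K \<dots> (Comp (Lay Cup i (n + p + 2 * length cs - i)) (CW (n + p) cs))"
  proof -
    have e: "n + 2 * length cs - i + p = n + p + 2 * length cs - i" using v by simp
    show ?thesis
      using pr v Cons LayR[where K=K and g=Cup and p=i and q="n + 2 * length cs - i" and r=p, unfolded e]
      by (intro eqv_comp) auto
  qed
  finally show ?case using v by simp
qed

lemma CW_tensL: "valid n cs \<Longrightarrow> eqv K (Tens (Idn p) (CW n cs)) (CW (p + n) (map ((+) p) cs))"
proof (induction cs)
  case Nil then show ?case by (simp add: ax_tid)
next
  case (Cons i cs)
  let ?L = "Lay Cup i (n + 2 * length cs - i)"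
  have v: "valid n cs" "i \<le> n + 2 * length cs" using Cons by auto
  note pr = CW_props[OF v(1)]
  have "eqv K (Tens (Idn p) (CW n (i # cs))) (Tens (Comp (Idn p) (Idn p)) (Comp ?L (CW n cs)))"
    using pr v unfolding CW.simps DW.simps by (intro eqv_tensR eqv_sym[OF idid]) auto
  also have "eqv K \<dots> (Comp (Tens (Idn p) ?L) (Tens (Idn p) (CW n cs)))"
    using pr v by (intro ax_inter) auto
  also have "eqv K \<dots> (Comp (Lay Cup (p + i) (n + 2 * length cs - i)) (CW (p + n) (map ((+) p) cs)))"
    using pr v Cons by (intro eqv_comp LayL) auto
  finally show ?case using v by simp
qed

lemma DW_tensR: "valid n ds \<Longrightarrow> eqv K (Tens (DW n ds) (Idn p)) (DW (n + p) ds)"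
proof (induction ds)
  case Nil then show ?case by (simp add: ax_tid)
next
  case (Cons i ds)
  let ?L = "Lay Cap i (n + 2 * length ds - i)"
  have v: "valid n ds" "i \<le> n + 2 * length ds" using Cons by auto
  note pr = DW_props[OF v(1)]
  have "eqv K (Tens (DW n (i # ds)) (Idn p)) (Tens (Comp (DW n ds) ?L) (Comp (Idn p) (Idn p)))"
    using pr v unfolding CW.simps DW.simps by (intro eqv_tensL eqv_sym[OF idid]) auto
  also have "eqv K \<dots> (Comp (Tens (DW n ds) (Idn p)) (Tens ?L (Idn p)))"
    using pr v by (intro ax_inter) auto
  also have "eqv K \<dots> (Comp (DW (n + p) ds) (Lay Cap i (n + p + 2 * length ds - i)))"
  proof -
    have e: "n + 2 * length ds - i + p = n + p + 2 * length ds - i" using v by simp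
    show ?thesis
      using pr v Cons LayR[where K=K and g=Cap and p=i and q="n + 2 * length ds - i" and r=p, unfolded e]
      by (intro eqv_comp) auto
  qed
  finally show ?case using v by simp
qed

lemma DW_tensL: "valid n ds \<Longrightarrow> eqv K (Tens (Idn p) (DW n ds)) (DW (p + n) (map ((+) p) ds))"
proof (induction ds)
  case Nil then show ?case by (simp add: ax_tid)
next
  case (Cons i ds)
  let ?L = "Lay Cap i (n + 2 * length ds - i)"
  have v: "valid n ds" "i \<le> n + 2 * length ds" using Cons by auto
  note pr = DW_props[OF v(1)]
  have "eqv K (Tens (Idn p) (DW n (i # ds))) (Tens (Comp (Idn p) (Idn p)) (Comp (DW n ds) ?L))"
    using pr v unfolding CW.simps DW.simps by (intro eqv_tensR eqv_sym[OF idid]) auto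
  also have "eqv K \<dots> (Comp (Tens (Idn p) (DW n ds)) (Tens (Idn p) ?L))"
    using pr v by (intro ax_inter) auto
  also have "eqv K \<dots> (Comp (DW (p + n) (map ((+) p) ds)) (Lay Cap (p + i) (n + 2 * length ds - i)))"
    using pr v Cons by (intro eqv_comp LayL) auto
  finally show ?case using v by simp
qed

lemma CW_tens: "valid k1 cs1 \<Longrightarrow> valid k2 cs2 \<Longrightarrow>
  eqv K (Tens (CW k1 cs1) (CW k2 cs2)) (CW (k1 + k2) (map ((+) (k1 + 2 * length cs1)) cs2 @ cs1))"
proof -
  assume v: "valid k1 cs1" "valid k2 cs2"
  note p1 = CW_props[OF v(1)] and p2 = CW_props[OF v(2)]
  have "eqv K (Tens (CW k1 cs1) (CW k2 cs2))
     (Comp (Tens (Idn (k1 + 2 * length cs1)) (CW k2 cs2)) (Tens (CW k1 cs1) (Idn k2)))"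
    using T1[where K=K and f="CW k1 cs1" and g="CW k2 cs2"] p1 p2 by simp
  also have "eqv K \<dots> (Comp (CW (k1 + k2 + 2 * length cs1) (map ((+) (k1 + 2 * length cs1)) cs2)) (CW (k1 + k2) cs1))"
    using p1 p2 v CW_tensL[OF v(2), of "k1 + 2 * length cs1"] CW_tensR[OF v(1), of k2]
    by (intro eqv_comp) (auto simp: algebra_simps)
  also have "eqv K \<dots> (CW (k1 + k2) (map ((+) (k1 + 2 * length cs1)) cs2 @ cs1))"
    using CW_app[of "k1 + k2" cs1 "map ((+) (k1 + 2 * length cs1)) cs2"] valid_shift[OF v(2), of "k1 + 2 * length cs1"]
      valid_wid[OF v(1), of k2]
    by (simp add: algebra_simps)
  finally show ?thesis .
qed

lemma DW_tens: "valid k1 ds1 \<Longrightarrow> valid k2 ds2 \<Longrightarrow>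
  eqv K (Tens (DW k1 ds1) (DW k2 ds2)) (DW (k1 + k2) (map ((+) (k1 + 2 * length ds1)) ds2 @ ds1))"
proof -
  assume v: "valid k1 ds1" "valid k2 ds2"
  note p1 = DW_props[OF v(1)] and p2 = DW_props[OF v(2)]
  have "eqv K (Tens (DW k1 ds1) (DW k2 ds2))
     (Comp (Tens (DW k1 ds1) (Idn k2)) (Tens (Idn (k1 + 2 * length ds1)) (DW k2 ds2)))"
    using T2[where K=K and f="DW k1 ds1" and g="DW k2 ds2"] p1 p2 by simp
  also have "eqv K \<dots> (Comp (DW (k1 + k2) ds1) (DW (k1 + k2 + 2 * length ds1) (map ((+) (k1 + 2 * length ds1)) ds2)))"
    using p1 p2 v DW_tensL[OF v(2), of "k1 + 2 * length ds1"] DW_tensR[OF v(1), of k2]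
    by (intro eqv_comp) (auto simp: algebra_simps)
  also have "eqv K \<dots> (DW (k1 + k2) (map ((+) (k1 + 2 * length ds1)) ds2 @ ds1))"
    using DW_app[of "k1 + k2" ds1 "map ((+) (k1 + 2 * length ds1)) ds2"] valid_shift[OF v(2), of "k1 + 2 * length ds1"]
      valid_wid[OF v(1), of k2]
    by (simp add: algebra_simps)
  finally show ?thesis .
qed

end

definition PR :: "'k::field itself \<Rightarrow> tm \<Rightarrow> nat \<Rightarrow> nat \<Rightarrow> bool" where
  "PR K t k1 l = (Zr K t
     \<or> (\<exists>cs'. length cs' + 1 = l \<and> valid k1 cs' \<and> eqv K t (CW k1 cs'))
     \<or> (\<exists>k' cs' i'. k1 = k' + 2 \<and> i' \<le> k' \<and> length cs' = l \<and> valid k' cs'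
          \<and> eqv K t (Comp (CW k' cs') (Lay Cap i' (k' - i')))))"

context
  fixes K :: "'k::field itself"
begin

lemma PR_eqv: "eqv K t t' \<Longrightarrow> PR K t' k1 l \<Longrightarrow> PR K t k1 l"
proof -
  assume a: "eqv K t t'" and b: "PR K t' k1 l"
  from b show ?thesis unfolding PR_def using Zr_eqv[OF a] eqv_trans[OF a] by blast
qed

lemma PR_cup:
  assumes pr: "PR K t k1 l" and w: "wf t" "tgt t = N'" and j: "j' \<le> N'"
  shows "PR K (Comp (Lay Cup j' (N' - j')) t) k1 (l + 1)"
proof -
  let ?U = "Lay Cup j' (N' - j')"
  have wU: "wf ?U" "src ?U = N'" using j by auto
  consider (z) "Zr K t"
    | (c) cs' where "length cs' + 1 = l" "valid k1 cs'" "eqv K t (CW k1 cs')"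
    | (p) k' cs' i' where "k1 = k' + 2" "i' \<le> k'" "length cs' = l" "valid k' cs'"
          "eqv K t (Comp (CW k' cs') (Lay Cap i' (k' - i')))"
    using pr unfolding PR_def by blast
  then show ?thesis
  proof cases
    case z then show ?thesis unfolding PR_def using Zr_compL[OF z] wU w by auto
  next
    case c
    have tt: "N' = k1 + 2 * length cs'" using c(3) w CW_props[OF c(2)] by (auto dest: eqv_wf)
    have "eqv K (Comp ?U t) (Comp ?U (CW k1 cs'))" using c wU w by (intro eqv_compL) auto
    moreover have "Comp ?U (CW k1 cs') = CW k1 (j' # cs')" using tt by simp
    moreover have "valid k1 (j' # cs')" using c j tt by simp
    ultimately show ?thesis unfolding PR_def using c by (intro disjI2 disjI1 exI[of _ "j' # cs'"]) auto
  next
    case p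
    have tt: "N' = k' + 2 * length cs'" using p(5) w CW_props[OF p(4)] by (auto dest: eqv_wf)
    note cp = CW_props[OF p(4)]
    have "eqv K (Comp ?U t) (Comp ?U (Comp (CW k' cs') (Lay Cap i' (k' - i'))))"
      using p wU w by (intro eqv_compL) auto
    also have "eqv K \<dots> (Comp (Comp ?U (CW k' cs')) (Lay Cap i' (k' - i')))"
      using p cp tt j by (intro ax_assoc) auto
    also have "Comp ?U (CW k' cs') = CW k' (j' # cs')" using tt by simp
    finally have "eqv K (Comp ?U t) (Comp (CW k' (j' # cs')) (Lay Cap i' (k' - i')))" .
    moreover have "valid k' (j' # cs')" using p j tt by simp
    ultimately show ?thesis unfolding PR_def using p
      by (intro disjI2 disjI2 exI[of _ k'] exI[of _ "j' # cs'"] exI[of _ i']) auto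
  qed
qed

lemma push: "valid k1 cs \<Longrightarrow> k1 + 2 * length cs = N + 2 \<Longrightarrow> i \<le> N \<Longrightarrow>
   PR K (Comp (Lay Cap i (N - i)) (CW k1 cs)) k1 (length cs)"
proof (induction cs arbitrary: N i)
  case Nil
  then have k: "k1 = N + 2" by simp
  have "eqv K (Comp (Lay Cap i (N - i)) (CW k1 [])) (Lay Cap i (N - i))"
    using ax_idr[where K=K and f="Lay Cap i (N - i)"] Nil k by simp
  also have "eqv K \<dots> (Comp (CW N []) (Lay Cap i (N - i)))"
    using eqv_sym[OF ax_idl[where K=K and f="Lay Cap i (N - i)"]] Nil by simp
  finally show ?case unfolding PR_def using k Nil
    by (intro disjI2 disjI2 exI[of _ N] exI[of _ "[]"] exI[of _ i]) auto
next
  case (Cons j cs)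
  let ?D = "Lay Cap i (N - i)" and ?U = "Lay Cup j (N - j)" and ?X = "CW k1 cs"
  have v: "valid k1 cs" "j \<le> N" "k1 + 2 * length cs = N" using Cons.prems by auto
  note xp = CW_props[OF v(1)]
  have e0: "eqv K (Comp ?D (CW k1 (j # cs))) (Comp (Comp ?D ?U) ?X)"
    using v xp Cons.prems by (simp add: ax_assoc)
  have wDU: "wf (Comp ?D ?U)" "src (Comp ?D ?U) = N" "tgt (Comp ?D ?U) = N" using v Cons.prems by auto
  have comm: "PR K (Comp ?D (CW k1 (j # cs))) k1 (length (j # cs))"
    if c: "eqv K (Comp ?D ?U) (Comp (Lay Cup j' (N' - j')) (Lay Cap i' (N' - i')))"
       and N': "N = N' + 2" "j' \<le> N'" "i' \<le> N'" for j' i' N'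
  proof -
    have ih: "PR K (Comp (Lay Cap i' (N' - i')) ?X) k1 (length cs)"
      using Cons.IH[OF v(1) _ N'(3)] v N' by simp
    have "PR K (Comp (Lay Cup j' (N' - j')) (Comp (Lay Cap i' (N' - i')) ?X)) k1 (length cs + 1)"
      using N' xp v by (intro PR_cup[OF ih]) auto
    moreover have "eqv K (Comp ?D (CW k1 (j # cs))) (Comp (Lay Cup j' (N' - j')) (Comp (Lay Cap i' (N' - i')) ?X))"
    proof -
      have "eqv K (Comp (Comp ?D ?U) ?X) (Comp (Comp (Lay Cup j' (N' - j')) (Lay Cap i' (N' - i'))) ?X)"
        using c xp v by (intro eqv_compR) auto
      also have "eqv K \<dots> (Comp (Lay Cup j' (N' - j')) (Comp (Lay Cap i' (N' - i')) ?X))"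
        using xp v N' by (intro eqv_sym[OF ax_assoc]) auto
      finally show ?thesis using e0 eqv_trans by blast
    qed
    ultimately show ?thesis using PR_eqv by auto
  qed
  consider (eq) "i = j" | (z1) "i = j + 1" | (z2) "j = i + 1" | (c1) "i + 2 \<le> j" | (c2) "j + 2 \<le> i"
    by linarith
  then show ?case
  proof cases
    case eq
    have "eqv K (Comp (Comp ?D ?U) ?X) (Comp (Idn N) ?X)"
      using Lay_cancel[where K=K and p=i and q="N - i"] eq v xp Cons.prems by (intro eqv_compR) auto
    also have "eqv K \<dots> ?X" using ax_idl[where K=K and f="?X"] xp v by simp
    finally show ?thesis unfolding PR_def using e0 eqv_trans v
      by (intro disjI2 disjI1 exI[of _ cs]) auto
  next
    case z1
    have zz: "Zr K (Comp ?D ?U)"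
      using Lay_zig1[where K=K and p=j and q="N - i"] z1 Cons.prems
      by (simp add: Suc_diff_Suc)
    have "Zr K (Comp (Comp ?D ?U) ?X)" using Zr_compR[OF zz, of ?X] wDU xp v by auto
    then show ?thesis unfolding PR_def using e0 Zr_eqv by blast
  next
    case z2
    have zz: "Zr K (Comp ?D ?U)"
      using Lay_zig2[where K=K and p=i and q="N - j"] z2 v
      by (simp add: Suc_diff_Suc)
    have "Zr K (Comp (Comp ?D ?U) ?X)" using Zr_compR[OF zz, of ?X] wDU xp v by auto
    then show ?thesis unfolding PR_def using e0 Zr_eqv by blast
  next
    case c1
    have e: "(N - 2) - (j - 2) = N - j" using c1 by simp
    have "eqv K (Comp ?D ?U) (Comp (Lay Cup (j - 2) ((N - 2) - (j - 2))) (Lay Cap i ((N - 2) - i)))"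
      unfolding e using mixcomm1[where K=K and i=i and j=j and w=N] c1 v by simp
    then show ?thesis using c1 v by (intro comm[where j'="j - 2" and i'=i and N'="N - 2"]) auto
  next
    case c2
    have e: "(N - 2) - (i - 2) = N - i" using c2 by simp
    have "eqv K (Comp ?D ?U) (Comp (Lay Cup j ((N - 2) - j)) (Lay Cap (i - 2) ((N - 2) - (i - 2))))"
      unfolding e using mixcomm2[where K=K and i=i and j=j and w=N] c2 Cons.prems by simp
    then show ?thesis using c2 Cons.prems by (intro comm[where j'=j and i'="i - 2" and N'="N - 2"]) auto
  qed
qed

end

definition NF :: "'k::field itself \<Rightarrow> tm \<Rightarrow> bool" where
  "NF K t = (\<exists>k cs ds. valid k cs \<and> valid k ds \<and> src t = k + 2 * length ds \<and> tgt t = k + 2 * length cs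
      \<and> eqv K t (Comp (CW k cs) (DW k ds)))"

context
  fixes K :: "'k::field itself"
begin

lemma middle: "valid k2 ds \<Longrightarrow> valid k1 cs \<Longrightarrow> k1 + 2 * length cs = k2 + 2 * length ds \<Longrightarrow>
  Zr K (Comp (DW k2 ds) (CW k1 cs)) \<or> NF K (Comp (DW k2 ds) (CW k1 cs))"
proof (induction ds arbitrary: k1 cs)
  case Nil
  note cp = CW_props[OF Nil(2)]
  have "eqv K (Comp (DW k2 []) (CW k1 cs)) (CW k1 cs)"
    using ax_idl[where K=K and f="CW k1 cs"] cp Nil by simp
  also have "eqv K \<dots> (Comp (CW k1 cs) (DW k1 []))"
    using eqv_sym[OF ax_idr[where K=K and f="CW k1 cs"]] cp by simp
  finally show ?case unfolding NF_def using Nil cp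
    by (intro disjI2 exI[of _ k1] exI[of _ cs] exI[of _ "[]"]) auto
next
  case (Cons i ds)
  let ?N = "k2 + 2 * length ds"
  let ?D = "Lay Cap i (?N - i)" and ?C = "CW k1 cs" and ?E = "DW k2 ds"
  have v: "valid k2 ds" "i \<le> ?N" using Cons.prems by auto
  note cp = CW_props[OF Cons.prems(2)] and dp = DW_props[OF v(1)]
  have e0: "eqv K (Comp (DW k2 (i # ds)) ?C) (Comp ?E (Comp ?D ?C))"
    using cp dp v Cons.prems by (simp add: eqv_sym ax_assoc)
  have wDC: "wf (Comp ?D ?C)" "src (Comp ?D ?C) = k1" "tgt (Comp ?D ?C) = ?N"
    using cp v Cons.prems by auto
  have "PR K (Comp ?D ?C) k1 (length cs)"
    using push[OF Cons.prems(2), where N="?N" and i=i and K=K] Cons.prems v by simp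
  then consider (z) "Zr K (Comp ?D ?C)"
    | (c) cs' where "length cs' + 1 = length cs" "valid k1 cs'" "eqv K (Comp ?D ?C) (CW k1 cs')"
    | (p) k' cs' i' where "k1 = k' + 2" "i' \<le> k'" "length cs' = length cs" "valid k' cs'"
          "eqv K (Comp ?D ?C) (Comp (CW k' cs') (Lay Cap i' (k' - i')))"
    unfolding PR_def by blast
  then show ?case
  proof cases
    case z
    have "Zr K (Comp ?E (Comp ?D ?C))" using Zr_compL[OF z, of ?E] dp wDC by auto
    then show ?thesis using Zr_eqv[OF e0] by blast
  next
    case c
    note cp' = CW_props[OF c(2)]
    have tt: "k1 + 2 * length cs' = ?N" using c(3) cp' wDC by (auto dest: eqv_wf)
    have e1: "eqv K (Comp (DW k2 (i # ds)) ?C) (Comp ?E (CW k1 cs'))"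
      using e0 eqv_trans eqv_compL[OF c(3), of ?E] dp wDC by auto
    have "Zr K (Comp ?E (CW k1 cs')) \<or> NF K (Comp ?E (CW k1 cs'))"
      using Cons.IH[OF v(1) c(2)] tt by simp
    then show ?thesis
    proof
      assume "Zr K (Comp ?E (CW k1 cs'))" then show ?thesis using Zr_eqv[OF e1] by blast
    next
      assume "NF K (Comp ?E (CW k1 cs'))"
      then show ?thesis unfolding NF_def using e1 eqv_trans eqv_wf[OF e1] by (metis)
    qed
  next
    case p
    note cp' = CW_props[OF p(4)]
    let ?L = "Lay Cap i' (k' - i')"
    have tt: "k' + 2 * length cs' = ?N" using p(5) cp' wDC by (auto dest: eqv_wf)
    have e1: "eqv K (Comp (DW k2 (i # ds)) ?C) (Comp (Comp ?E (CW k' cs')) ?L)"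
    proof -
      have "eqv K (Comp ?E (Comp ?D ?C)) (Comp ?E (Comp (CW k' cs') ?L))"
        using eqv_compL[OF p(5), of ?E] dp wDC by auto
      also have "eqv K \<dots> (Comp (Comp ?E (CW k' cs')) ?L)"
        using dp cp' tt p by (intro ax_assoc) auto
      finally show ?thesis using e0 eqv_trans by blast
    qed
    have "Zr K (Comp ?E (CW k' cs')) \<or> NF K (Comp ?E (CW k' cs'))"
      using Cons.IH[OF v(1) p(4)] tt by simp
    then show ?thesis
    proof
      assume z: "Zr K (Comp ?E (CW k' cs'))"
      have "Zr K (Comp (Comp ?E (CW k' cs')) ?L)" using Zr_compR[OF z, of ?L] dp cp' p by auto
      then show ?thesis using Zr_eqv[OF e1] by blast
    next
      assume "NF K (Comp ?E (CW k' cs'))"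
      then obtain k cs3 ds3 where n: "valid k cs3" "valid k ds3" "k' = k + 2 * length ds3"
        "k2 = k + 2 * length cs3" "eqv K (Comp ?E (CW k' cs')) (Comp (CW k cs3) (DW k ds3))"
        unfolding NF_def using dp cp' by auto
      note c3 = CW_props[OF n(1)] and d3 = DW_props[OF n(2)]
      have "eqv K (Comp (DW k2 (i # ds)) ?C) (Comp (Comp (CW k cs3) (DW k ds3)) ?L)"
        using e1 eqv_trans eqv_compR[OF n(5), of ?L] dp cp' p by auto
      also have "eqv K \<dots> (Comp (CW k cs3) (Comp (DW k ds3) ?L))"
        using c3 d3 n p by (intro eqv_sym[OF ax_assoc]) auto
      also have "Comp (DW k ds3) ?L = DW k (i' # ds3)" using n by simp
      finally have "eqv K (Comp (DW k2 (i # ds)) ?C) (Comp (CW k cs3) (DW k (i' # ds3)))" .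
      moreover have "valid k (i' # ds3)" using n p by simp
      ultimately show ?thesis unfolding NF_def using n p c3 cp dp
        by (intro disjI2 exI[of _ k] exI[of _ cs3] exI[of _ "i' # ds3"]) auto
    qed
  qed
qed

end

context
  fixes K :: "'k::field itself"
begin

lemma valid_shift': "valid n cs \<Longrightarrow> m = p + n \<Longrightarrow> valid m (map ((+) p) cs)"
  using valid_shift by blast

lemma NF_I: "valid k cs \<Longrightarrow> valid k ds \<Longrightarrow> src t = k + 2 * length ds \<Longrightarrow> tgt t = k + 2 * length cs
  \<Longrightarrow> eqv K t (Comp (CW k cs) (DW k ds)) \<Longrightarrow> NF K t"
  unfolding NF_def by blast

lemma NF_comp:
  assumes s: "NF K s" and t: "NF K t" and st: "src s = tgt t"
  shows "Zr K (Comp s t) \<or> NF K (Comp s t)"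
proof -
  obtain k2 cs2 ds2 where S: "valid k2 cs2" "valid k2 ds2" "src s = k2 + 2 * length ds2"
     "tgt s = k2 + 2 * length cs2" "eqv K s (Comp (CW k2 cs2) (DW k2 ds2))"
    using s unfolding NF_def by blast
  obtain k1 cs1 ds1 where T: "valid k1 cs1" "valid k1 ds1" "src t = k1 + 2 * length ds1"
     "tgt t = k1 + 2 * length cs1" "eqv K t (Comp (CW k1 cs1) (DW k1 ds1))"
    using t unfolding NF_def by blast
  let ?C2 = "CW k2 cs2" and ?D2 = "DW k2 ds2" and ?C1 = "CW k1 cs1" and ?D1 = "DW k1 ds1"
  note c2 = CW_props[OF S(1)] and d2 = DW_props[OF S(2)] and c1 = CW_props[OF T(1)] and d1 = DW_props[OF T(2)]
  have e0: "eqv K (Comp s t) (Comp ?C2 (Comp (Comp ?D2 ?C1) ?D1))"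
  proof -
    have "eqv K (Comp s t) (Comp (Comp ?C2 ?D2) (Comp ?C1 ?D1))"
      using S T st by (intro eqv_comp) auto
    also have "eqv K \<dots> (Comp ?C2 (Comp ?D2 (Comp ?C1 ?D1)))"
      using c2 d2 c1 d1 S T st by (intro eqv_sym[OF ax_assoc]) auto
    also have "eqv K \<dots> (Comp ?C2 (Comp (Comp ?D2 ?C1) ?D1))"
      using c2 d2 c1 d1 S T st by (intro eqv_compL ax_assoc) auto
    finally show ?thesis .
  qed
  have mid: "Zr K (Comp ?D2 ?C1) \<or> NF K (Comp ?D2 ?C1)"
    using middle[OF S(2) T(1)] S T st by simp
  then show ?thesis
  proof
    assume z: "Zr K (Comp ?D2 ?C1)"
    have "Zr K (Comp (Comp ?D2 ?C1) ?D1)" using Zr_compR[OF z, of ?D1] c1 d1 by auto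
    then have "Zr K (Comp ?C2 (Comp (Comp ?D2 ?C1) ?D1))" using Zr_compL[where s="Comp (Comp ?D2 ?C1) ?D1" and g="?C2"] c2 d2
      by auto
    then show ?thesis using Zr_eqv[OF e0] by blast
  next
    assume "NF K (Comp ?D2 ?C1)"
    then obtain k cs ds where M: "valid k cs" "valid k ds" "k1 = k + 2 * length ds" "k2 = k + 2 * length cs"
      "eqv K (Comp ?D2 ?C1) (Comp (CW k cs) (DW k ds))"
      unfolding NF_def using c1 d2 by auto
    note c = CW_props[OF M(1)] and d = DW_props[OF M(2)]
    have "eqv K (Comp s t) (Comp ?C2 (Comp (Comp (CW k cs) (DW k ds)) ?D1))"
      using e0 eqv_trans eqv_compL[OF eqv_compR[OF M(5), of ?D1], of ?C2] c1 d1 c2 d2 by auto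
    also have "eqv K \<dots> (Comp ?C2 (Comp (CW k cs) (Comp (DW k ds) ?D1)))"
      using c d c1 d1 c2 M by (intro eqv_compL eqv_sym[OF ax_assoc]) auto
    also have "eqv K \<dots> (Comp (Comp ?C2 (CW k cs)) (Comp (DW k ds) ?D1))"
      using c d c1 d1 c2 M by (intro ax_assoc) auto
    also have "eqv K \<dots> (Comp (CW k (cs2 @ cs)) (DW k (ds1 @ ds)))"
    proof -
      have a: "valid (k + 2 * length cs) cs2" "valid (k + 2 * length ds) ds1" using S(1) T(2) M by auto
      show ?thesis
        using CW_app[OF a(1) M(1), where K=K] DW_app[OF a(2) M(2), where K=K] M c d
        by (intro eqv_comp) (auto simp: valid_app)
    qed
    finally show ?thesis using M S T st
      by (intro disjI2 NF_I[of k "cs2 @ cs" "ds1 @ ds"]) (auto simp: valid_app)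
  qed
qed

lemma NF_tens:
  assumes s: "NF K s" and t: "NF K t"
  shows "NF K (Tens s t)"
proof -
  obtain k1 cs1 ds1 where S: "valid k1 cs1" "valid k1 ds1" "src s = k1 + 2 * length ds1"
     "tgt s = k1 + 2 * length cs1" "eqv K s (Comp (CW k1 cs1) (DW k1 ds1))"
    using s unfolding NF_def by blast
  obtain k2 cs2 ds2 where T: "valid k2 cs2" "valid k2 ds2" "src t = k2 + 2 * length ds2"
     "tgt t = k2 + 2 * length cs2" "eqv K t (Comp (CW k2 cs2) (DW k2 ds2))"
    using t unfolding NF_def by blast
  note c2 = CW_props[OF T(1)] and d2 = DW_props[OF T(2)] and c1 = CW_props[OF S(1)] and d1 = DW_props[OF S(2)]
  let ?cs = "map ((+) (k1 + 2 * length cs1)) cs2 @ cs1" and ?ds = "map ((+) (k1 + 2 * length ds1)) ds2 @ ds1"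
  have "eqv K (Tens s t) (Tens (Comp (CW k1 cs1) (DW k1 ds1)) (Comp (CW k2 cs2) (DW k2 ds2)))"
    using S T by (intro eqv_tens) auto
  also have "eqv K \<dots> (Comp (Tens (CW k1 cs1) (CW k2 cs2)) (Tens (DW k1 ds1) (DW k2 ds2)))"
    using c1 c2 d1 d2 by (intro ax_inter) auto
  also have "eqv K \<dots> (Comp (CW (k1 + k2) ?cs) (DW (k1 + k2) ?ds))"
    using CW_tens[OF S(1) T(1), where K=K] DW_tens[OF S(2) T(2), where K=K] c1 c2 d1 d2
    by (intro eqv_comp) auto
  finally have E: "eqv K (Tens s t) (Comp (CW (k1 + k2) ?cs) (DW (k1 + k2) ?ds))" .
  moreover have "valid (k1 + k2 + 2 * length cs1) (map ((+) (k1 + 2 * length cs1)) cs2)"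
    using valid_shift[OF T(1), of "k1 + 2 * length cs1"] by (simp add: ac_simps)
  moreover have "valid (k1 + k2 + 2 * length ds1) (map ((+) (k1 + 2 * length ds1)) ds2)"
    using valid_shift[OF T(2), of "k1 + 2 * length ds1"] by (simp add: ac_simps)
  ultimately show ?thesis using S T valid_wid[OF S(1), of k2] valid_wid[OF S(2), of k2]
    by (intro NF_I[of "k1 + k2" ?cs ?ds]) (auto simp: valid_app)
qed

lemma NF_all: "wf t \<Longrightarrow> Zr K t \<or> NF K t"
proof (induction t)
  case Cup
  have "eqv K Cup (Comp (CW 0 [0]) (DW 0 []))"
  proof -
    have "eqv K (Comp (CW 0 [0]) (DW 0 [])) (CW 0 [0])" using ax_idr[where K=K and f="CW 0 [0]"] by simp
    also have "eqv K \<dots> (Lay Cup 0 0)" using ax_idr[where K=K and f="Lay Cup 0 0"] by simp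
    also have "eqv K \<dots> Cup" by (rule Lay00) simp
    finally show ?thesis by (rule eqv_sym)
  qed
  then show ?case unfolding NF_def by (intro disjI2 exI[of _ 0] exI[of _ "[0]"] exI[of _ "[]"]) auto
next
  case Cap
  have "eqv K Cap (Comp (CW 0 []) (DW 0 [0]))"
  proof -
    have "eqv K (Comp (CW 0 []) (DW 0 [0])) (DW 0 [0])" using ax_idl[where K=K and f="DW 0 [0]"] by simp
    also have "eqv K \<dots> (Lay Cap 0 0)" using ax_idl[where K=K and f="Lay Cap 0 0"] by simp
    also have "eqv K \<dots> Cap" by (rule Lay00) simp
    finally show ?thesis by (rule eqv_sym)
  qed
  then show ?case unfolding NF_def by (intro disjI2 exI[of _ 0] exI[of _ "[]"] exI[of _ "[0]"]) auto
next
  case (Idn n)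
  have "eqv K (Idn n) (Comp (CW n []) (DW n []))" using eqv_sym[OF idid] by simp
  then show ?case unfolding NF_def by (intro disjI2 exI[of _ n] exI[of _ "[]"] exI[of _ "[]"]) auto
next
  case (Comp g f)
  then have w: "wf g" "wf f" "src g = tgt f" by auto
  show ?case
  proof (cases "Zr K g")
    case True then show ?thesis using Zr_compR[where s=g and f=f] w by auto
  next
    case g: False
    show ?thesis
    proof (cases "Zr K f")
      case True then show ?thesis using Zr_compL[where s=f and g=g] w by auto
    next
      case False then show ?thesis using g Comp.IH w NF_comp by blast
    qed
  qed
next
  case (Tens f g)
  then have w: "wf f" "wf g" by auto
  show ?case
  proof (cases "Zr K f")
    case True then show ?thesis using Zr_tensR[where s=f and g=g] w by auto
  next
    case f: False
    show ?thesis
    proof (cases "Zr K g")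
      case True then show ?thesis using Zr_tensL[where s=g and g=f] w by auto
    next
      case False then show ?thesis using f Tens.IH w NF_tens by blast
    qed
  qed
qed

lemma nocap_CW: "wf t \<Longrightarrow> no_cap t \<Longrightarrow> \<exists>cs. valid (src t) cs \<and> tgt t = src t + 2 * length cs \<and> eqv K t (CW (src t) cs)"
proof (induction t)
  case Cup
  have "eqv K (CW 0 [0]) (Lay Cup 0 0)" using ax_idr[where K=K and f="Lay Cup 0 0"] by simp
  also have "eqv K \<dots> Cup" by (rule Lay00) simp
  finally show ?case by (intro exI[of _ "[0]"]) (auto intro: eqv_sym)
next
  case (Idn n)
  then show ?case by (intro exI[of _ "[]"]) (auto intro: eqv_refl)
next
  case (Comp g f)
  then have w: "wf g" "wf f" "src g = tgt f" "no_cap g" "no_cap f" by auto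
  obtain cs1 where f: "valid (src f) cs1" "tgt f = src f + 2 * length cs1" "eqv K f (CW (src f) cs1)"
    using Comp.IH(2) w by blast
  obtain cs2 where g: "valid (src g) cs2" "tgt g = src g + 2 * length cs2" "eqv K g (CW (src g) cs2)"
    using Comp.IH(1) w by blast
  have "eqv K (Comp g f) (Comp (CW (src f + 2 * length cs1) cs2) (CW (src f) cs1))"
    using f g w by (intro eqv_comp) auto
  also have "eqv K \<dots> (CW (src f) (cs2 @ cs1))"
    using f g w by (intro CW_app) auto
  finally show ?case using f g w by (intro exI[of _ "cs2 @ cs1"]) (auto simp: valid_app)
next
  case (Tens f g)
  then have w: "wf g" "wf f" "no_cap g" "no_cap f" by auto
  obtain cs1 where f: "valid (src f) cs1" "tgt f = src f + 2 * length cs1" "eqv K f (CW (src f) cs1)"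
    using Tens.IH(1) w by blast
  obtain cs2 where g: "valid (src g) cs2" "tgt g = src g + 2 * length cs2" "eqv K g (CW (src g) cs2)"
    using Tens.IH(2) w by blast
  have "eqv K (Tens f g) (Tens (CW (src f) cs1) (CW (src g) cs2))"
    using f g by (intro eqv_tens) auto
  also have "eqv K \<dots> (CW (src f + src g) (map ((+) (src f + 2 * length cs1)) cs2 @ cs1))"
    using f g by (intro CW_tens)
  finally show ?case using f g w
    by (intro exI[of _ "map ((+) (src f + 2 * length cs1)) cs2 @ cs1"]) (auto simp: valid_app valid_wid intro: valid_shift')
qed simp

lemma nocup_DW: "wf t \<Longrightarrow> no_cup t \<Longrightarrow> \<exists>ds. valid (tgt t) ds \<and> src t = tgt t + 2 * length ds \<and> eqv K t (DW (tgt t) ds)"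
proof (induction t)
  case Cap
  have "eqv K (DW 0 [0]) (Lay Cap 0 0)" using ax_idl[where K=K and f="Lay Cap 0 0"] by simp
  also have "eqv K \<dots> Cap" by (rule Lay00) simp
  finally show ?case by (intro exI[of _ "[0]"]) (auto intro: eqv_sym)
next
  case (Idn n)
  then show ?case by (intro exI[of _ "[]"]) (auto intro: eqv_refl)
next
  case (Comp g f)
  then have w: "wf g" "wf f" "src g = tgt f" "no_cup g" "no_cup f" by auto
  obtain ds1 where f: "valid (tgt f) ds1" "src f = tgt f + 2 * length ds1" "eqv K f (DW (tgt f) ds1)"
    using Comp.IH(2) w by blast
  obtain ds2 where g: "valid (tgt g) ds2" "src g = tgt g + 2 * length ds2" "eqv K g (DW (tgt g) ds2)"
    using Comp.IH(1) w by blast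
  have "eqv K (Comp g f) (Comp (DW (tgt g) ds2) (DW (tgt g + 2 * length ds2) ds1))"
    using f g w by (intro eqv_comp) auto
  also have "eqv K \<dots> (DW (tgt g) (ds1 @ ds2))"
    using f g w by (intro DW_app) auto
  finally show ?case using f g w by (intro exI[of _ "ds1 @ ds2"]) (auto simp: valid_app)
next
  case (Tens f g)
  then have w: "wf g" "wf f" "no_cup g" "no_cup f" by auto
  obtain ds1 where f: "valid (tgt f) ds1" "src f = tgt f + 2 * length ds1" "eqv K f (DW (tgt f) ds1)"
    using Tens.IH(1) w by blast
  obtain ds2 where g: "valid (tgt g) ds2" "src g = tgt g + 2 * length ds2" "eqv K g (DW (tgt g) ds2)"
    using Tens.IH(2) w by blast
  have "eqv K (Tens f g) (Tens (DW (tgt f) ds1) (DW (tgt g) ds2))"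
    using f g by (intro eqv_tens) auto
  also have "eqv K \<dots> (DW (tgt f + tgt g) (map ((+) (tgt f + 2 * length ds1)) ds2 @ ds1))"
    using f g by (intro DW_tens)
  finally show ?case using f g w
    by (intro exI[of _ "map ((+) (tgt f + 2 * length ds1)) ds2 @ ds1"]) (auto simp: valid_app valid_wid intro: valid_shift')
qed simp

end

fun ins :: "nat \<Rightarrow> nat list \<Rightarrow> nat list" where
  "ins i [] = [i]"
| "ins i (j # cs) = (if i \<le> j + 1 then i # j # cs else j # ins (i - 2) cs)"

fun srt :: "nat list \<Rightarrow> nat list" where
  "srt [] = []" | "srt (i # cs) = ins i (srt cs)"

fun nrm :: "nat list \<Rightarrow> bool" where
  "nrm [] = True" | "nrm [i] = True" | "nrm (i # j # cs) = (i \<le> j + 1 \<and> nrm (j # cs))"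

lemma nrm_cons: "nrm (x # r) = (r = [] \<or> (x \<le> hd r + 1 \<and> nrm r))"
  by (cases r) auto

lemma ins_len[simp]: "length (ins i cs) = Suc (length cs)"
  by (induction cs arbitrary: i) auto

lemma ins_hd: "ins i cs = x # r \<Longrightarrow> x = i \<or> (cs \<noteq> [] \<and> x = hd cs)"
  by (cases cs) (auto split: if_splits)

lemma ins_nrm: "nrm cs \<Longrightarrow> nrm (ins i cs)"
proof (induction cs arbitrary: i)
  case Nil then show ?case by simp
next
  case (Cons j cs)
  show ?case
  proof (cases "i \<le> j + 1")
    case True then show ?thesis using Cons by simp
  next
    case False
    have n: "nrm cs" using Cons.prems by (auto simp: nrm_cons)
    obtain x r where xr: "ins (i - 2) cs = x # r" using ins_len[of "i - 2" cs] by (cases "ins (i - 2) cs") auto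
    have "x = i - 2 \<or> (cs \<noteq> [] \<and> x = hd cs)" using ins_hd[OF xr] .
    then have "j \<le> x + 1" using False Cons.prems by (auto simp: nrm_cons)
    then show ?thesis using False Cons.IH[OF n, of "i - 2"] xr by (simp add: nrm_cons)
  qed
qed

lemma ins_valid: "valid n cs \<Longrightarrow> i \<le> n + 2 * length cs \<Longrightarrow> valid n (ins i cs)"
  by (induction cs arbitrary: i) auto

lemma srt_props: "valid n cs \<Longrightarrow> valid n (srt cs) \<and> nrm (srt cs) \<and> length (srt cs) = length cs"
proof (induction cs)
  case (Cons i cs)
  then show ?case using ins_valid[of n "srt cs" i] ins_nrm[of "srt cs" i] by auto
qed simp

context
  fixes K :: "'k::field itself"
begin

lemma CW_ins: "valid n cs \<Longrightarrow> i \<le> n + 2 * length cs \<Longrightarrow> eqv K (CW n (i # cs)) (CW n (ins i cs))"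
proof (induction cs arbitrary: i)
  case Nil then show ?case using CW_props[of n "[i]"] by (simp add: eqv_refl)
next
  case (Cons j cs)
  have v: "valid n cs" "j \<le> n + 2 * length cs" using Cons.prems by auto
  note cp = CW_props[OF v(1)]
  let ?w = "n + 2 * length cs"
  show ?case
  proof (cases "i \<le> j + 1")
    case True then show ?thesis using CW_props[OF Cons.prems(1)] Cons.prems by (simp add: eqv_refl)
  next
    case False
    have e1: "eqv K (CW n (i # j # cs)) (Comp (Comp (Lay Cup i (?w + 2 - i)) (Lay Cup j (?w - j))) (CW n cs))"
      using cp v Cons.prems by (simp add: ax_assoc)
    also have "eqv K \<dots> (Comp (Comp (Lay Cup j (?w + 2 - j)) (Lay Cup (i - 2) (?w + 2 - i))) (CW n cs))"
      using cupcomm[where K=K and i=i and j=j and w="?w"] False Cons.prems cp v by (intro eqv_compR) auto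
    also have "eqv K \<dots> (Comp (Lay Cup j (?w + 2 - j)) (CW n ((i - 2) # cs)))"
    proof -
      have "?w + 2 - i = n + 2 * length cs - (i - 2)" using False by simp
      then show ?thesis using cp v Cons.prems False by (simp add: eqv_sym ax_assoc)
    qed
    also have "eqv K \<dots> (Comp (Lay Cup j (?w + 2 - j)) (CW n (ins (i - 2) cs)))"
      using Cons.IH[OF v(1), of "i - 2"] Cons.prems CW_props[OF v(1), of ] False
        CW_props[of n "(i - 2) # cs"] v
      by (intro eqv_compL) auto
    finally show ?thesis using False by simp
  qed
qed

lemma DW_ins: "valid n ds \<Longrightarrow> i \<le> n + 2 * length ds \<Longrightarrow> eqv K (DW n (i # ds)) (DW n (ins i ds))"
proof (induction ds arbitrary: i)
  case Nil then show ?case using DW_props[of n "[i]"] by (simp add: eqv_refl)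
next
  case (Cons j ds)
  have v: "valid n ds" "j \<le> n + 2 * length ds" using Cons.prems by auto
  note dp = DW_props[OF v(1)]
  let ?w = "n + 2 * length ds"
  show ?case
  proof (cases "i \<le> j + 1")
    case True then show ?thesis using DW_props[OF Cons.prems(1)] Cons.prems by (simp add: eqv_refl)
  next
    case False
    have e1: "eqv K (DW n (i # j # ds)) (Comp (DW n ds) (Comp (Lay Cap j (?w - j)) (Lay Cap i (?w + 2 - i))))"
      using dp v Cons.prems by (simp add: eqv_sym ax_assoc)
    also have "eqv K \<dots> (Comp (DW n ds) (Comp (Lay Cap (i - 2) (?w + 2 - i)) (Lay Cap j (?w + 2 - j))))"
      using capcomm[where K=K and i=i and j=j and w="?w"] False Cons.prems dp v by (intro eqv_compL) auto
    also have "eqv K \<dots> (Comp (DW n ((i - 2) # ds)) (Lay Cap j (?w + 2 - j)))"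
    proof -
      have "?w + 2 - i = n + 2 * length ds - (i - 2)" using False by simp
      then show ?thesis using dp v Cons.prems False by (simp add: ax_assoc)
    qed
    also have "eqv K \<dots> (Comp (DW n (ins (i - 2) ds)) (Lay Cap j (?w + 2 - j)))"
      using Cons.IH[OF v(1), of "i - 2"] Cons.prems False DW_props[of n "(i - 2) # ds"] v
      by (intro eqv_compR) auto
    finally show ?thesis using False by simp
  qed
qed

lemma CW_srt: "valid n cs \<Longrightarrow> eqv K (CW n cs) (CW n (srt cs))"
proof (induction cs)
  case Nil then show ?case by (simp add: eqv_refl)
next
  case (Cons i cs)
  have v: "valid n cs" "i \<le> n + 2 * length cs" using Cons.prems by auto
  note sp = srt_props[OF v(1)]
  have "eqv K (CW n (i # cs)) (CW n (i # srt cs))"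
    using Cons.IH[OF v(1)] sp v CW_props[OF v(1)] by (simp add: eqv_compL)
  also have "eqv K \<dots> (CW n (ins i (srt cs)))" using sp v by (intro CW_ins) auto
  finally show ?case by simp
qed

lemma DW_srt: "valid n ds \<Longrightarrow> eqv K (DW n ds) (DW n (srt ds))"
proof (induction ds)
  case Nil then show ?case by (simp add: eqv_refl)
next
  case (Cons i ds)
  have v: "valid n ds" "i \<le> n + 2 * length ds" using Cons.prems by auto
  note sp = srt_props[OF v(1)]
  have "eqv K (DW n (i # ds)) (DW n (i # srt ds))"
    using Cons.IH[OF v(1)] sp v DW_props[OF v(1)] by (simp add: eqv_compR)
  also have "eqv K \<dots> (DW n (ins i (srt ds)))" using sp v by (intro DW_ins) auto
  finally show ?case by simp
qed

end

definition ins01 :: "nat \<Rightarrow> nat list \<Rightarrow> nat list" where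
  "ins01 i w = take i w @ [0, 1] @ drop i w"

fun cwa :: "nat list \<Rightarrow> nat list \<Rightarrow> nat list" where
  "cwa [] w = w" | "cwa (i # cs) w = ins01 i (cwa cs w)"

lemma ins01_len[simp]: "i \<le> length w \<Longrightarrow> length (ins01 i w) = length w + 2"
  by (simp add: ins01_def)

lemma cwa_len: "valid k cs \<Longrightarrow> length w = k \<Longrightarrow> length (cwa cs w) = k + 2 * length cs"
  by (induction cs) auto

lemma sem_LayCup: "sem (Lay Cup p q) w = (if length w = p + q then Some (ins01 p w) else None)"
  by (auto simp: Lay_def ins01_def split: option.splits)

lemma sem_LayCap: "sem (Lay Cap p q) w = Some v \<longleftrightarrow> length v = p + q \<and> w = ins01 p v"
proof
  assume a: "sem (Lay Cap p q) w = Some v"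
  then have l: "length (take p w) = p"
    "take 2 (drop p w) = [0,1]" "length (drop 2 (drop p w)) = q" "v = take p w @ drop 2 (drop p w)"
    by (auto simp: Lay_def split: option.splits if_splits)
  have tv: "take p v = take p w" using l by simp
  have dv: "drop p v = drop 2 (drop p w)" using l by simp
  have "w = take p w @ take 2 (drop p w) @ drop 2 (drop p w)" by (simp only: append_take_drop_id)
  then have "w = ins01 p v" using l(2) tv dv by (simp add: ins01_def)
  moreover have "length v = p + q" using l by simp
  ultimately show "length v = p + q \<and> w = ins01 p v" by simp
next
  assume a: "length v = p + q \<and> w = ins01 p v"
  then show "sem (Lay Cap p q) w = Some v"
    by (auto simp: Lay_def ins01_def split: option.splits)
qed

lemma sem_CW: "valid n cs \<Longrightarrow> sem (CW n cs) w = (if length w = n then Some (cwa cs w) else None)"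
  by (induction cs) (auto simp: sem_LayCup cwa_len split: option.splits)

lemma sem_DW: "valid n ds \<Longrightarrow> sem (DW n ds) w = Some v \<longleftrightarrow> length v = n \<and> w = cwa ds v"
proof (induction ds arbitrary: w)
  case Nil then show ?case by auto
next
  case (Cons i ds)
  then have v: "valid n ds" "i \<le> n + 2 * length ds" by auto
  show ?case
  proof
    assume "sem (DW n (i # ds)) w = Some v"
    then obtain u where u: "sem (Lay Cap i (n + 2 * length ds - i)) w = Some u" "sem (DW n ds) u = Some v"
      by (auto split: option.splits)
    then show "length v = n \<and> w = cwa (i # ds) v" using Cons.IH[OF v(1)] sem_LayCap by auto
  next
    assume a: "length v = n \<and> w = cwa (i # ds) v"
    then have "sem (Lay Cap i (n + 2 * length ds - i)) w = Some (cwa ds v)"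
      using sem_LayCap cwa_len[OF v(1)] v by auto
    moreover have "sem (DW n ds) (cwa ds v) = Some v" using Cons.IH[OF v(1)] a by auto
    ultimately show "sem (DW n (i # ds)) w = Some v" by simp
  qed
qed

lemma sem_NF:
  assumes a: "valid k cs" "valid k ds"
  shows "sem (Comp (CW k cs) (DW k ds)) u = Some v \<longleftrightarrow> (\<exists>z. length z = k \<and> u = cwa ds z \<and> v = cwa cs z)"
proof
  assume b: "sem (Comp (CW k cs) (DW k ds)) u = Some v"
  then obtain z where z: "sem (DW k ds) u = Some z" "sem (CW k cs) z = Some v" by (auto split: option.splits)
  then show "\<exists>z. length z = k \<and> u = cwa ds z \<and> v = cwa cs z"
    using sem_DW[OF a(2)] sem_CW[OF a(1)] by (auto split: if_splits)
next
  assume "\<exists>z. length z = k \<and> u = cwa ds z \<and> v = cwa cs z"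
  then obtain z where z: "length z = k" "u = cwa ds z" "v = cwa cs z" by blast
  then have "sem (DW k ds) u = Some z" using sem_DW[OF a(2)] by simp
  then show "sem (Comp (CW k cs) (DW k ds)) u = Some v" using sem_CW[OF a(1)] z by simp
qed

definition agr :: "nat list \<Rightarrow> nat list \<Rightarrow> bool" where
  "agr b x = (length b = length x \<and> (\<forall>i<length b. b ! i \<noteq> 2 \<longrightarrow> x ! i = b ! i))"

lemma nth_ins01: "i \<le> length w \<Longrightarrow> q < length w + 2 \<Longrightarrow>
  ins01 i w ! q = (if q < i then w ! q else if q = i then 0 else if q = i + 1 then 1 else w ! (q - 2))"
  by (auto simp: ins01_def nth_append min_def)

lemma agr_ins: "agr b x \<Longrightarrow> j \<le> length b \<Longrightarrow> agr (ins01 j b) (ins01 j x)"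
  unfolding agr_def by (auto simp: nth_ins01)

lemma agr_cwa: "valid k ds \<Longrightarrow> length z = k \<Longrightarrow> agr (cwa ds (replicate k 2)) (cwa ds z)"
proof (induction ds)
  case Nil then show ?case by (simp add: agr_def)
next
  case (Cons i ds)
  then show ?case using agr_ins cwa_len[of k ds "replicate k 2"] by auto
qed

lemma agr_antisym: "agr b x \<Longrightarrow> agr x b \<Longrightarrow> b = x"
  unfolding agr_def by (metis nth_equalityI)

lemma cnt_ins01: "length (filter (\<lambda>c. c = 2) (ins01 i w)) = length (filter (\<lambda>c. c = 2) w)"
proof -
  have "filter (\<lambda>c. c = 2) (ins01 i w) = filter (\<lambda>c. c = 2) (take i w) @ filter (\<lambda>c. c = 2) (drop i w)"
    by (simp add: ins01_def)
  also have "\<dots> = filter (\<lambda>c. c = 2) w" by (metis append_take_drop_id filter_append)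
  finally show ?thesis by simp
qed

lemma cnt_cwa: "length (filter (\<lambda>c. c = 2) (cwa ds z)) = length (filter (\<lambda>c. c = 2) z)"
  by (induction ds) (auto simp: cnt_ins01)

lemma ins01_inj: "length a = length b \<Longrightarrow> ins01 i a = ins01 i b \<Longrightarrow> a = b"
  unfolding ins01_def by (metis append_eq_append_conv append_take_drop_id length_take same_append_eq)

lemma cwa_inj: "valid k ds \<Longrightarrow> length z = k \<Longrightarrow> length z' = k \<Longrightarrow> cwa ds z = cwa ds z' \<Longrightarrow> z = z'"
proof (induction ds)
  case (Cons i ds)
  then show ?case using ins01_inj cwa_len[of k ds z] cwa_len[of k ds z'] by auto
qed simp

lemma lm01: "nrm (i # cs) \<Longrightarrow> valid k (i # cs) \<Longrightarrow> w = cwa (i # cs) (replicate k 2) \<Longrightarrow>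
  w ! i = 0 \<and> w ! (i + 1) = 1 \<and> (\<forall>q<i. \<not> (w ! q = 0 \<and> w ! (q + 1) = 1))"
proof (induction cs arbitrary: i w)
  case Nil
  then show ?case by (auto simp: nth_ins01)
next
  case (Cons j cs)
  let ?w0 = "cwa (j # cs) (replicate k 2)"
  have n: "nrm (j # cs)" "i \<le> j + 1" using Cons.prems by auto
  have v: "valid k (j # cs)" "i \<le> length ?w0" using Cons.prems cwa_len[of k "j # cs" "replicate k 2"] by auto
  have ih: "?w0 ! j = 0 \<and> ?w0 ! (j + 1) = 1 \<and> (\<forall>q<j. \<not> (?w0 ! q = 0 \<and> ?w0 ! (q + 1) = 1))"
    using Cons.IH[OF n(1) v(1)] by simp
  have w: "w = ins01 i ?w0" using Cons.prems by simp
  show ?case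
  proof (intro conjI allI impI)
    show "w ! i = 0" "w ! (i + 1) = 1" using w v by (auto simp: nth_ins01)
  next
    fix q assume q: "q < i"
    show "\<not> (w ! q = 0 \<and> w ! (q + 1) = 1)"
    proof (cases "q + 1 < i")
      case True
      then have "w ! q = ?w0 ! q" "w ! (q + 1) = ?w0 ! (q + 1)" using w v by (auto simp: nth_ins01)
      moreover have "q < j" using True n by simp
      ultimately show ?thesis using ih by auto
    next
      case False
      then have "q + 1 = i" using q by simp
      then have "w ! (q + 1) = 0" using w v by (auto simp: nth_ins01)
      then show ?thesis by simp
    qed
  qed
qed

lemma nrm_inj: "nrm cs \<Longrightarrow> nrm cs' \<Longrightarrow> valid k cs \<Longrightarrow> valid k cs' \<Longrightarrow> length cs = length cs' \<Longrightarrow>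
  cwa cs (replicate k 2) = cwa cs' (replicate k 2) \<Longrightarrow> cs = cs'"
proof (induction cs arbitrary: cs')
  case Nil then show ?case by simp
next
  case (Cons i r)
  obtain i' r' where c': "cs' = i' # r'" using Cons.prems(5) by (cases cs') auto
  let ?w = "cwa (i # r) (replicate k 2)"
  have A: "?w ! i = 0 \<and> ?w ! (i + 1) = 1 \<and> (\<forall>q<i. \<not> (?w ! q = 0 \<and> ?w ! (q + 1) = 1))"
    using lm01[OF Cons.prems(1) Cons.prems(3)] by simp
  have B: "?w ! i' = 0 \<and> ?w ! (i' + 1) = 1 \<and> (\<forall>q<i'. \<not> (?w ! q = 0 \<and> ?w ! (q + 1) = 1))"
    using lm01[of i' r' k] Cons.prems c' by simp
  have ii: "i = i'" using A B by (metis linorder_neqE_nat)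
  have vr: "valid k r" "valid k r'" using Cons.prems c' by auto
  have "cwa r (replicate k 2) = cwa r' (replicate k 2)"
    using Cons.prems(6) c' ii ins01_inj cwa_len[OF vr(1), of "replicate k 2"] cwa_len[OF vr(2), of "replicate k 2"]
      Cons.prems(5) by auto
  then have "r = r'" using Cons.IH[of r'] Cons.prems c' vr by (auto simp: nrm_cons)
  then show ?case using ii c' by simp
qed

lemma uniq:
  assumes v: "valid k cs" "valid k ds" "valid k' cs'" "valid k' ds'"
    and n: "nrm cs" "nrm ds" "nrm cs'" "nrm ds'"
    and e: "\<And>u v. (\<exists>z. length z = k \<and> u = cwa ds z \<and> v = cwa cs z) \<longleftrightarrow> (\<exists>z. length z = k' \<and> u = cwa ds' z \<and> v = cwa cs' z)"
  shows "k = k' \<and> cs = cs' \<and> ds = ds'"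
proof -
  let ?r = "replicate k 2" and ?r' = "replicate k' 2"
  have "\<exists>z. length z = k \<and> cwa ds ?r = cwa ds z \<and> cwa cs ?r = cwa cs z" by (intro exI[of _ ?r]) simp
  then obtain z' where z': "length z' = k'" "cwa ds ?r = cwa ds' z'" "cwa cs ?r = cwa cs' z'"
    using e[of "cwa ds ?r" "cwa cs ?r"] by auto
  have "\<exists>z. length z = k' \<and> cwa ds' ?r' = cwa ds' z \<and> cwa cs' ?r' = cwa cs' z" by (intro exI[of _ ?r']) simp
  then obtain z'' where z'': "length z'' = k" "cwa ds' ?r' = cwa ds z''" "cwa cs' ?r' = cwa cs z''"
    using e[of "cwa ds' ?r'" "cwa cs' ?r'"] by auto
  have "agr (cwa ds ?r) (cwa ds' ?r')" using agr_cwa[OF v(2) z''(1)] z''(2) by simp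
  moreover have "agr (cwa ds' ?r') (cwa ds ?r)" using agr_cwa[OF v(4) z'(1)] z'(2) by simp
  ultimately have bb: "cwa ds ?r = cwa ds' ?r'" by (rule agr_antisym)
  have kk: "k = k'" using arg_cong[OF bb, of "\<lambda>w. length (filter (\<lambda>c. c = 2) w)"]
    by (simp add: cnt_cwa filter_replicate)
  have zz: "z' = ?r" using cwa_inj[OF v(4) z'(1), of ?r'] z'(2) bb kk by simp
  have ld: "length ds = length ds'" using bb kk cwa_len[OF v(2), of ?r] cwa_len[OF v(4), of ?r'] by simp
  have lc: "length cs = length cs'" using z'(3) zz kk cwa_len[OF v(1), of ?r] cwa_len[OF v(3), of ?r] by simp
  have "ds = ds'" using nrm_inj[OF n(2) n(4) v(2)] v(4) kk ld bb by simp
  moreover have "cs = cs'" using nrm_inj[OF n(1) n(3) v(1)] v(3) kk lc z'(3) zz by simp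
  ultimately show ?thesis using kk by simp
qed

theorem mainTheorem16:
  fixes K :: "'k::field itself" and x :: tm and m n :: nat
  assumes "typed x m n" and "tl_nonzero K m n x"
  shows "\<exists>k a b. typed a k n \<and> no_cap a \<and> tl_nonzero K k n a
           \<and> typed b m k \<and> no_cup b \<and> tl_nonzero K m k b
           \<and> tl_eq K m n x (Comp a b)
           \<and> (\<forall>k' a' b'. typed a' k' n \<and> no_cap a' \<and> tl_nonzero K k' n a'
                \<and> typed b' m k' \<and> no_cup b' \<and> tl_nonzero K m k' b'
                \<and> tl_eq K m n x (Comp a' b')
                \<longrightarrow> k' = k \<and> tl_eq K k n a' a \<and> tl_eq K m k b' b)"
proof -
  have wx: "wf x" "src x = m" "tgt x = n" using assms(1) by (auto simp: typed_iff)
  have nz: "\<not> Zr K x" using assms tl_nonzero_Zr by blast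
  then have "NF K x" using NF_all[OF wx(1)] by blast
  then obtain k cs0 ds0 where N: "valid k cs0" "valid k ds0" "m = k + 2 * length ds0"
      "n = k + 2 * length cs0" "eqv K x (Comp (CW k cs0) (DW k ds0))"
    unfolding NF_def using wx by auto
  define cs where "cs = srt cs0"
  define ds where "ds = srt ds0"
  have sc: "valid k cs" "nrm cs" "length cs = length cs0" using srt_props[OF N(1)] by (auto simp: cs_def)
  have sd: "valid k ds" "nrm ds" "length ds = length ds0" using srt_props[OF N(2)] by (auto simp: ds_def)
  note c = CW_props[OF sc(1)] and d = DW_props[OF sd(1)]
  let ?a = "CW k cs" and ?b = "DW k ds"
  have ex: "eqv K x (Comp ?a ?b)"
  proof -
    have "eqv K (Comp (CW k cs0) (DW k ds0)) (Comp ?a ?b)"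
      using CW_srt[OF N(1), where K=K] DW_srt[OF N(2), where K=K] CW_props[OF N(1)] DW_props[OF N(2)]
      unfolding cs_def ds_def by (intro eqv_comp) auto
    then show ?thesis using N(5) eqv_trans by blast
  qed
  have ta: "typed ?a k n" using c N sc by (simp add: typed_iff)
  have tb: "typed ?b m k" using d N sd by (simp add: typed_iff)
  have za: "\<not> Zr K ?a"
  proof
    assume "Zr K ?a"
    then have "Zr K (Comp ?a ?b)" using Zr_compR[where s="?a" and f="?b"] c d by auto
    then show False using Zr_eqv[OF ex] nz by blast
  qed
  have zb: "\<not> Zr K ?b"
  proof
    assume "Zr K ?b"
    then have "Zr K (Comp ?a ?b)" using Zr_compL[where s="?b" and g="?a"] c d by auto
    then show False using Zr_eqv[OF ex] nz by blast
  qed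
  have tab: "typed (Comp ?a ?b) m n" using ta tb by (auto simp: typed_iff)
  show ?thesis
  proof (rule exI[of _ k], rule exI[of _ ?a], rule exI[of _ ?b], intro conjI allI impI)
    show "typed ?a k n" by (rule ta)
    show "typed ?b m k" by (rule tb)
    show "no_cap ?a" by (rule CW_nocap)
    show "no_cup ?b" by (rule DW_nocup)
    show "tl_nonzero K k n ?a" using za ta tl_nonzero_Zr by blast
    show "tl_nonzero K m k ?b" using zb tb tl_nonzero_Zr by blast
    show "tl_eq K m n x (Comp ?a ?b)" using ex tl_eq_eqv[OF assms(1) tab] by blast
  next
    fix k' a' b'
    assume h: "typed a' k' n \<and> no_cap a' \<and> tl_nonzero K k' n a' \<and> typed b' m k' \<and> no_cup b'
       \<and> tl_nonzero K m k' b' \<and> tl_eq K m n x (Comp a' b')"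
    have wa: "wf a'" "src a' = k'" "tgt a' = n" using h by (auto simp: typed_iff)
    have wb: "wf b'" "src b' = m" "tgt b' = k'" using h by (auto simp: typed_iff)
    obtain cs1 where A: "valid k' cs1" "n = k' + 2 * length cs1" "eqv K a' (CW k' cs1)"
      using nocap_CW[where K=K, OF wa(1)] h wa by auto
    obtain ds1 where B: "valid k' ds1" "m = k' + 2 * length ds1" "eqv K b' (DW k' ds1)"
      using nocup_DW[where K=K, OF wb(1)] h wb by auto
    define cs' where "cs' = srt cs1"
    define ds' where "ds' = srt ds1"
    have sc': "valid k' cs'" "nrm cs'" "length cs' = length cs1" using srt_props[OF A(1)] by (auto simp: cs'_def)
    have sd': "valid k' ds'" "nrm ds'" "length ds' = length ds1" using srt_props[OF B(1)] by (auto simp: ds'_def)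
    have A': "eqv K a' (CW k' cs')" using A(3) CW_srt[OF A(1), where K=K] eqv_trans unfolding cs'_def by blast
    have B': "eqv K b' (DW k' ds')" using B(3) DW_srt[OF B(1), where K=K] eqv_trans unfolding ds'_def by blast
    have tab': "typed (Comp a' b') m n" using h by (auto simp: typed_iff)
    have "eqv K x (Comp a' b')" using h tl_eq_eqv[OF assms(1) tab'] by blast
    then have "eqv K (Comp a' b') (Comp ?a ?b)" using ex eqv_sym eqv_trans by blast
    moreover have "eqv K (Comp a' b') (Comp (CW k' cs') (DW k' ds'))" using A' B' wa wb by (intro eqv_comp) auto
    ultimately have "eqv K (Comp (CW k' cs') (DW k' ds')) (Comp ?a ?b)" using eqv_sym eqv_trans by blast
    then have "sem (Comp (CW k' cs') (DW k' ds')) = sem (Comp ?a ?b)" by (rule eqv_sem)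
    then have "\<And>u v. (\<exists>z. length z = k \<and> u = cwa ds z \<and> v = cwa cs z) \<longleftrightarrow> (\<exists>z. length z = k' \<and> u = cwa ds' z \<and> v = cwa cs' z)"
      using sem_NF[OF sc(1) sd(1)] sem_NF[OF sc'(1) sd'(1)] by metis
    then have u: "k = k' \<and> cs = cs' \<and> ds = ds'" using uniq[OF sc(1) sd(1) sc'(1) sd'(1) sc(2) sd(2) sc'(2) sd'(2)] by blast
    show "k' = k" using u by simp
    show "tl_eq K k n a' ?a" using A' u tl_eq_eqv[of a' k n ?a K] h ta by simp
    show "tl_eq K m k b' ?b" using B' u tl_eq_eqv[of b' m k ?b K] h tb by simp
  qed
qed


end
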